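(* Let $\sigma$ be a skeleton in $\widehat P$ with $\underline{\dim}\,\sigma=\mathbf d$ such that $\mathfrak{Grass}(\sigma)\neq\varnothing$. Then there is an isomorphism $\phi$ from $\mathfrak{Grass}(\sigma)$ onto a closed subvariety of $\operatorname{Rep}(A,\mathbf d)$ such that, for every $C\in\mathfrak{Grass}(\sigma)$, the points $C$ and $\phi(C)$ parametrize isomorphic $A$-modules (i.e. $P/C\cong$ the module given by $\phi(C)$).
   Context: $K$ is an algebraically closed field and $A=KQ/I$, where $Q$ is a finite quiver with vertices $e_1,\dots,e_n$ and $I$ an admissible ideal; $J$ is the Jacobson radical of $A$ and $L+1$ its Loewy length. Paths are composed right to left ($pq$ = "$p$ after $q$"). For $\mathbf d=(d_1,\dots,d_n)$, $\operatorname{Rep}(A,\mathbf d)$ is the affine variety of tuples $(x_\alpha)_{\alpha\in Q_1}$, $x_\alpha\in\operatorname{Hom}_K(K^{d_{\mathrm{start}(\alpha)}},K^{d_{\mathrm{end}(\alpha)}})$, satisfying the relations in $I$. The radical layering of a module $M$ is $\mathbb S(M)=(J^lM/J^{l+1}M)_{0\le l\le L}$; a semisimple sequence $\mathbb S=(\mathbb S_0,\dots,\mathbb S_L)$ with top $T=\mathbb S_0$ and dimension vector $\mathbf d=\underline{\dim}\bigoplus_l\mathbb S_l$ is a sequence of semisimple modules. Write $\mathbb S_l=\bigoplus_i S_i^{m(l,i)}$. Let $t=\dim T$, $P=\bigoplus_{r=1}^tAz_r$ a projective cover of $T$ with top elements $z_r$, each normed by a vertex $e(r)$ (i.e. $e(r)z_r=z_r$),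 and $\widehat P=\bigoplus_{r=1}^t KQz_r$ the corresponding projective $KQ$-module. A path in $\widehat P$ is an element $pz_r$ with $p$ a path of $Q$ starting at $e(r)$; its length is the length of $p$. A skeleton in $\widehat P$ with radical layering $\mathbb S$ is a set $\sigma$ of paths in $\widehat P$ of length $\le L$ containing all $z_1,\dots,z_t$, containing exactly $m(l,i)$ paths of length $l$ ending in $e_i$ for all $l,i$, and closed under initial subpaths ($p_2p_1z_r\in\sigma\Rightarrow p_1z_r\in\sigma$); $\underline{\dim}\,\sigma:=\underline{\dim}\,\mathbb S$. $\mathfrak{Grass}(\sigma)$ is the set of $A$-submodules $C\subseteq P$ with $\mathbb S(P/C)=\mathbb S$ such that the residue classes $\{b+C: b\in\sigma\}$ (images of the paths of $\sigma$ in $P/C$) form a $K$-basis of $P/C$; it is a locally closed (affine) subvariety of the Grassmannian of $(\dim P-|\mathbf d|)$-dimensional subspaces of $P$. *)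

theory Defs
  imports Main "HOL-Computational_Algebra.Polynomial"
begin

(* Quiver Q: vertices 0..<n (vertex i stands for e_(i+1) of the paper), *)
(* A path is a pair (i, as): start vertex i and the list of arrows as   *)
(* in order of traversal (first arrow first).  Hence the paper's path   *)
(* p2 p1 ("p2 after p1") is (i, as1 @ as2), and p1 is an initial        *)
(* subpath of it.                                                       *)

type_synonym 'a qpath = "nat \<times> 'a list"

definition alg_closed_field :: "'k::field itself \<Rightarrow> bool" where
  "alg_closed_field _ \<longleftrightarrow> (\<forall>p::'k poly. degree p > 0 \<longrightarrow> (\<exists>x. poly p x = 0))"

definition pend :: "('a \<Rightarrow> nat) \<Rightarrow> 'a qpath \<Rightarrow> nat" where
  "pend tgt p = (if snd p = [] then fst p else tgt (last (snd p)))"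

definition plen :: "'a qpath \<Rightarrow> nat" where
  "plen p = length (snd p)"

definition valid_path :: "nat \<Rightarrow> 'a set \<Rightarrow> ('a \<Rightarrow> nat) \<Rightarrow> ('a \<Rightarrow> nat) \<Rightarrow> 'a qpath \<Rightarrow> bool" where
  "valid_path n Q1 src tgt p \<longleftrightarrow>
     fst p < n \<and> set (snd p) \<subseteq> Q1 \<and>
     (\<forall>k < length (snd p). src (snd p ! k) = (if k = 0 then fst p else tgt (snd p ! (k - 1))))"

definition KQ :: "nat \<Rightarrow> 'a set \<Rightarrow> ('a \<Rightarrow> nat) \<Rightarrow> ('a \<Rightarrow> nat) \<Rightarrow> ('a qpath \<Rightarrow> 'k::field) set" where
  "KQ n Q1 src tgt = {f. finite {p. f p \<noteq> 0} \<and> (\<forall>p. f p \<noteq> 0 \<longrightarrow> valid_path n Q1 src tgt p)}"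

(* multiplication in KQ: pmult tgt f g = f g  ("f after g") *)
definition pmult :: "('a \<Rightarrow> nat) \<Rightarrow> ('a qpath \<Rightarrow> 'k::field) \<Rightarrow> ('a qpath \<Rightarrow> 'k) \<Rightarrow> 'a qpath \<Rightarrow> 'k" where
  "pmult tgt f g = (\<lambda>p. \<Sum>k\<le>length (snd p).
       g (fst p, take k (snd p)) * f (pend tgt (fst p, take k (snd p)), drop k (snd p)))"

(* l-th power of the arrow ideal of KQ: combinations of paths of length >= l *)
definition Rpow :: "nat \<Rightarrow> 'a set \<Rightarrow> ('a \<Rightarrow> nat) \<Rightarrow> ('a \<Rightarrow> nat) \<Rightarrow> nat \<Rightarrow> ('a qpath \<Rightarrow> 'k::field) set" where
  "Rpow n Q1 src tgt l = {f \<in> KQ n Q1 src tgt. \<forall>p. plen p < l \<longrightarrow> f p = 0}"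

definition is_ideal_KQ :: "nat \<Rightarrow> 'a set \<Rightarrow> ('a \<Rightarrow> nat) \<Rightarrow> ('a \<Rightarrow> nat) \<Rightarrow> ('a qpath \<Rightarrow> 'k::field) set \<Rightarrow> bool" where
  "is_ideal_KQ n Q1 src tgt I \<longleftrightarrow>
     I \<subseteq> KQ n Q1 src tgt \<and> (\<lambda>_. 0) \<in> I \<and>
     (\<forall>f\<in>I. \<forall>g\<in>I. (\<lambda>p. f p + g p) \<in> I) \<and>
     (\<forall>f\<in>I. \<forall>c. (\<lambda>p. c * f p) \<in> I) \<and>
     (\<forall>f\<in>I. \<forall>a\<in>KQ n Q1 src tgt. pmult tgt a f \<in> I \<and> pmult tgt f a \<in> I)"

definition admissible :: "nat \<Rightarrow> 'a set \<Rightarrow> ('a \<Rightarrow> nat) \<Rightarrow> ('a \<Rightarrow> nat) \<Rightarrow> ('a qpath \<Rightarrow> 'k::field) set \<Rightarrow> bool" where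
  "admissible n Q1 src tgt I \<longleftrightarrow>
     is_ideal_KQ n Q1 src tgt I \<and>
     (\<exists>m\<ge>2. Rpow n Q1 src tgt m \<subseteq> I) \<and> I \<subseteq> Rpow n Q1 src tgt 2"

(* The projective KQ-module  Phat = (+)_{r<t} KQ z_r, z_r normed by e r.*)
(* Elements: finitely supported functions on pairs (r, path p) with p   *)
(* starting at e r; the pair (r,p) is the path p z_r.                   *)
(* The projective A-module P = Phat / I Phat; A-submodules C of P       *)
(* correspond bijectively to KQ-submodules Chat of Phat containing      *)
(* I Phat, with P/C = Phat/Chat.  We work with Chat throughout.         *)

definition Phat :: "nat \<Rightarrow> 'a set \<Rightarrow> ('a \<Rightarrow> nat) \<Rightarrow> ('a \<Rightarrow> nat) \<Rightarrow> nat \<Rightarrow> (nat \<Rightarrow> nat)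
                    \<Rightarrow> (nat \<times> 'a qpath \<Rightarrow> 'k::field) set" where
  "Phat n Q1 src tgt t e = {x. finite {y. x y \<noteq> 0} \<and>
      (\<forall>r p. x (r, p) \<noteq> 0 \<longrightarrow> r < t \<and> valid_path n Q1 src tgt p \<and> fst p = e r)}"

definition pact :: "('a \<Rightarrow> nat) \<Rightarrow> ('a qpath \<Rightarrow> 'k::field) \<Rightarrow> (nat \<times> 'a qpath \<Rightarrow> 'k) \<Rightarrow> nat \<times> 'a qpath \<Rightarrow> 'k" where
  "pact tgt f x = (\<lambda>y. pmult tgt f (\<lambda>q. x (fst y, q)) (snd y))"

definition IPhat :: "nat \<Rightarrow> 'a set \<Rightarrow> ('a \<Rightarrow> nat) \<Rightarrow> ('a \<Rightarrow> nat) \<Rightarrow> nat \<Rightarrow> (nat \<Rightarrow> nat)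
                    \<Rightarrow> ('a qpath \<Rightarrow> 'k::field) set \<Rightarrow> (nat \<times> 'a qpath \<Rightarrow> 'k) set" where
  "IPhat n Q1 src tgt t e I = {x \<in> Phat n Q1 src tgt t e. \<forall>r. (\<lambda>q. x (r, q)) \<in> I}"

definition RPhat :: "nat \<Rightarrow> 'a set \<Rightarrow> ('a \<Rightarrow> nat) \<Rightarrow> ('a \<Rightarrow> nat) \<Rightarrow> nat \<Rightarrow> (nat \<Rightarrow> nat)
                    \<Rightarrow> nat \<Rightarrow> (nat \<times> 'a qpath \<Rightarrow> 'k::field) set" where
  "RPhat n Q1 src tgt t e l = {x \<in> Phat n Q1 src tgt t e. \<forall>r p. plen p < l \<longrightarrow> x (r, p) = 0}"

definition path_vec :: "nat \<times> 'a qpath \<Rightarrow> nat \<times> 'a qpath \<Rightarrow> 'k::field" where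
  "path_vec b = (\<lambda>y. if y = b then 1 else 0)"

definition lincomb :: "(('x \<Rightarrow> 'k) \<Rightarrow> 'k::field) \<Rightarrow> ('x \<Rightarrow> 'k) set \<Rightarrow> 'x \<Rightarrow> 'k" where
  "lincomb c B = (\<lambda>y. \<Sum>b\<in>B. c b * b y)"

definition is_subspace :: "('x \<Rightarrow> 'k::field) set \<Rightarrow> ('x \<Rightarrow> 'k) set \<Rightarrow> bool" where
  "is_subspace V W \<longleftrightarrow> W \<subseteq> V \<and> (\<lambda>_. 0) \<in> W \<and>
      (\<forall>u\<in>W. \<forall>w\<in>W. (\<lambda>y. u y + w y) \<in> W) \<and> (\<forall>u\<in>W. \<forall>c. (\<lambda>y. c * u y) \<in> W)"

definition indep_mod :: "('x \<Rightarrow> 'k::field) set \<Rightarrow> ('x \<Rightarrow> 'k) set \<Rightarrow> bool" where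
  "indep_mod W B \<longleftrightarrow> finite B \<and> (\<forall>c. lincomb c B \<in> W \<longrightarrow> (\<forall>b\<in>B. c b = 0))"

definition spans_mod :: "('x \<Rightarrow> 'k::field) set \<Rightarrow> ('x \<Rightarrow> 'k) set \<Rightarrow> ('x \<Rightarrow> 'k) set \<Rightarrow> bool" where
  "spans_mod W U B \<longleftrightarrow> (\<forall>u\<in>U. \<exists>c. (\<lambda>y. u y - lincomb c B y) \<in> W)"

definition quot_dim :: "('x \<Rightarrow> 'k::field) set \<Rightarrow> ('x \<Rightarrow> 'k) set \<Rightarrow> nat \<Rightarrow> bool" where
  "quot_dim U W k \<longleftrightarrow> (\<exists>B. B \<subseteq> U \<and> finite B \<and> card B = k \<and> indep_mod W B \<and> spans_mod W U B)"

definition set_plus :: "('x \<Rightarrow> 'k::field) set \<Rightarrow> ('x \<Rightarrow> 'k) set \<Rightarrow> ('x \<Rightarrow> 'k) set" where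
  "set_plus U W = {(\<lambda>y. u y + w y) | u w. u \<in> U \<and> w \<in> W}"

definition at_vertex :: "('a \<Rightarrow> nat) \<Rightarrow> nat \<Rightarrow> (nat \<times> 'a qpath \<Rightarrow> 'k::field) set \<Rightarrow> (nat \<times> 'a qpath \<Rightarrow> 'k) set" where
  "at_vertex tgt i U = {x \<in> U. \<forall>r p. x (r, p) \<noteq> 0 \<longrightarrow> pend tgt p = i}"

definition is_submodule :: "nat \<Rightarrow> 'a set \<Rightarrow> ('a \<Rightarrow> nat) \<Rightarrow> ('a \<Rightarrow> nat) \<Rightarrow> nat \<Rightarrow> (nat \<Rightarrow> nat)
                    \<Rightarrow> (nat \<times> 'a qpath \<Rightarrow> 'k::field) set \<Rightarrow> bool" where
  "is_submodule n Q1 src tgt t e C \<longleftrightarrow> is_subspace (Phat n Q1 src tgt t e) C \<and>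
      (\<forall>f\<in>KQ n Q1 src tgt. \<forall>x\<in>C. pact tgt f x \<in> C)"

(* S(Phat/C) = S, where S_l = (+)_i S_i^(m l i):
   m l i = dim e_i (J^l M / J^(l+1) M) with M = Phat/C,
   J^l M = (J^l Phat + C)/C *)
definition radical_layering_is ::
  "nat \<Rightarrow> 'a set \<Rightarrow> ('a \<Rightarrow> nat) \<Rightarrow> ('a \<Rightarrow> nat) \<Rightarrow> nat \<Rightarrow> (nat \<Rightarrow> nat) \<Rightarrow> nat
     \<Rightarrow> (nat \<Rightarrow> nat \<Rightarrow> nat) \<Rightarrow> (nat \<times> 'a qpath \<Rightarrow> 'k::field) set \<Rightarrow> bool" where
  "radical_layering_is n Q1 src tgt t e L m C \<longleftrightarrow>
     (\<forall>l\<le>L. \<forall>i<n.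
        quot_dim (at_vertex tgt i (set_plus (RPhat n Q1 src tgt t e l) C))
                 (at_vertex tgt i (set_plus (RPhat n Q1 src tgt t e (Suc l)) C)) (m l i))"

definition is_skeleton ::
  "nat \<Rightarrow> 'a set \<Rightarrow> ('a \<Rightarrow> nat) \<Rightarrow> ('a \<Rightarrow> nat) \<Rightarrow> nat \<Rightarrow> (nat \<Rightarrow> nat) \<Rightarrow> nat
     \<Rightarrow> (nat \<Rightarrow> nat \<Rightarrow> nat) \<Rightarrow> (nat \<times> 'a qpath) set \<Rightarrow> bool" where
  "is_skeleton n Q1 src tgt t e L m \<sigma> \<longleftrightarrow>
     (\<forall>(r, p)\<in>\<sigma>. r < t \<and> valid_path n Q1 src tgt p \<and> fst p = e r \<and> plen p \<le> L) \<and>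
     (\<forall>r<t. (r, (e r, [])) \<in> \<sigma>) \<and>
     (\<forall>l\<le>L. \<forall>i<n. card {(r, p) \<in> \<sigma>. plen p = l \<and> pend tgt p = i} = m l i) \<and>
     (\<forall>r i as k. (r, (i, as)) \<in> \<sigma> \<longrightarrow> k \<le> length as \<longrightarrow> (r, (i, take k as)) \<in> \<sigma>)"

definition Grass ::
  "nat \<Rightarrow> 'a set \<Rightarrow> ('a \<Rightarrow> nat) \<Rightarrow> ('a \<Rightarrow> nat) \<Rightarrow> ('a qpath \<Rightarrow> 'k::field) set \<Rightarrow> nat \<Rightarrow> (nat \<Rightarrow> nat) \<Rightarrow> nat
     \<Rightarrow> (nat \<Rightarrow> nat \<Rightarrow> nat) \<Rightarrow> (nat \<times> 'a qpath) set \<Rightarrow> (nat \<times> 'a qpath \<Rightarrow> 'k) set set" where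
  "Grass n Q1 src tgt I t e L m \<sigma> =
     {C. is_submodule n Q1 src tgt t e C \<and> IPhat n Q1 src tgt t e I \<subseteq> C \<and>
         radical_layering_is n Q1 src tgt t e L m C \<and>
         indep_mod C (path_vec ` \<sigma>) \<and> spans_mod C (Phat n Q1 src tgt t e) (path_vec ` \<sigma>)}"

(* Representations: x alpha is a d(tgt alpha) x d(src alpha) matrix,   *)
(* entries outside the box are 0.                                       *)

definition rep_ambient :: "'a set \<Rightarrow> ('a \<Rightarrow> nat) \<Rightarrow> ('a \<Rightarrow> nat) \<Rightarrow> (nat \<Rightarrow> nat)
                    \<Rightarrow> ('a \<Rightarrow> nat \<Rightarrow> nat \<Rightarrow> 'k::field) set" where
  "rep_ambient Q1 src tgt d = {x. \<forall>\<alpha> j k. x \<alpha> j k \<noteq> 0 \<longrightarrow> \<alpha> \<in> Q1 \<and> j < d (tgt \<alpha>) \<and> k < d (src \<alpha>)}"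

(* matrix x_p of a path p = (i,[a1,...,ak]):  x_ak ... x_a1 *)
definition eval_path :: "('a \<Rightarrow> nat) \<Rightarrow> (nat \<Rightarrow> nat) \<Rightarrow> ('a \<Rightarrow> nat \<Rightarrow> nat \<Rightarrow> 'k::field) \<Rightarrow> 'a qpath
                    \<Rightarrow> nat \<Rightarrow> nat \<Rightarrow> 'k" where
  "eval_path src d x p = foldl (\<lambda>M \<alpha>. \<lambda>j k. \<Sum>l<d (src \<alpha>). x \<alpha> j l * M l k)
                              (\<lambda>j k. if j = k then 1 else 0) (snd p)"

definition Rep :: "nat \<Rightarrow> 'a set \<Rightarrow> ('a \<Rightarrow> nat) \<Rightarrow> ('a \<Rightarrow> nat) \<Rightarrow> ('a qpath \<Rightarrow> 'k::field) set \<Rightarrow> (nat \<Rightarrow> nat)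
                    \<Rightarrow> ('a \<Rightarrow> nat \<Rightarrow> nat \<Rightarrow> 'k) set" where
  "Rep n Q1 src tgt I d = {x \<in> rep_ambient Q1 src tgt d.
      \<forall>\<rho>\<in>I. \<forall>i<n. \<forall>j<n. \<forall>a<d j. \<forall>b<d i.
        (\<Sum>p\<in>{p. \<rho> p \<noteq> 0 \<and> fst p = i \<and> pend tgt p = j}. \<rho> p * eval_path src d x p a b) = 0}"

(* the module M_x = (+)_{i<n} K^(d i) given by x: vectors v with v i a, a < d i *)
definition Mvec :: "nat \<Rightarrow> (nat \<Rightarrow> nat) \<Rightarrow> (nat \<Rightarrow> nat \<Rightarrow> 'k::field) set" where
  "Mvec n d = {v. \<forall>i a. v i a \<noteq> 0 \<longrightarrow> i < n \<and> a < d i}"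

definition mact :: "nat \<Rightarrow> ('a \<Rightarrow> nat) \<Rightarrow> ('a \<Rightarrow> nat) \<Rightarrow> (nat \<Rightarrow> nat) \<Rightarrow> ('a \<Rightarrow> nat \<Rightarrow> nat \<Rightarrow> 'k::field)
                    \<Rightarrow> ('a qpath \<Rightarrow> 'k) \<Rightarrow> (nat \<Rightarrow> nat \<Rightarrow> 'k) \<Rightarrow> nat \<Rightarrow> nat \<Rightarrow> 'k" where
  "mact n src tgt d x f v = (\<lambda>j a. if j < n \<and> a < d j then
      (\<Sum>p\<in>{p. f p \<noteq> 0 \<and> pend tgt p = j}. f p * (\<Sum>b<d (fst p). eval_path src d x p a b * v (fst p) b))
      else 0)"

(* Phat/C is isomorphic, as a KQ-module (equivalently A-module), to M_x *)
definition quot_iso_rep ::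
  "nat \<Rightarrow> 'a set \<Rightarrow> ('a \<Rightarrow> nat) \<Rightarrow> ('a \<Rightarrow> nat) \<Rightarrow> nat \<Rightarrow> (nat \<Rightarrow> nat) \<Rightarrow> (nat \<Rightarrow> nat)
     \<Rightarrow> (nat \<times> 'a qpath \<Rightarrow> 'k::field) set \<Rightarrow> ('a \<Rightarrow> nat \<Rightarrow> nat \<Rightarrow> 'k) \<Rightarrow> bool" where
  "quot_iso_rep n Q1 src tgt t e d C x \<longleftrightarrow>
     (\<exists>\<Psi> :: (nat \<times> 'a qpath \<Rightarrow> 'k) \<Rightarrow> nat \<Rightarrow> nat \<Rightarrow> 'k.
        (\<forall>u\<in>Phat n Q1 src tgt t e. \<forall>w\<in>Phat n Q1 src tgt t e.
            \<Psi> (\<lambda>y. u y + w y) = (\<lambda>i a. \<Psi> u i a + \<Psi> w i a)) \<and>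
        (\<forall>u\<in>Phat n Q1 src tgt t e. \<forall>c. \<Psi> (\<lambda>y. c * u y) = (\<lambda>i a. c * \<Psi> u i a)) \<and>
        \<Psi> ` Phat n Q1 src tgt t e = Mvec n d \<and>
        (\<forall>u\<in>Phat n Q1 src tgt t e. \<Psi> u = (\<lambda>_ _. 0) \<longleftrightarrow> u \<in> C) \<and>
        (\<forall>f\<in>KQ n Q1 src tgt. \<forall>u\<in>Phat n Q1 src tgt t e.
            \<Psi> (pact tgt f u) = mact n src tgt d x f (\<Psi> u)))"

inductive_set polys_over :: "('x \<Rightarrow> 'k::field) set \<Rightarrow> ('x \<Rightarrow> 'k) set" for atoms where
  const: "(\<lambda>_. c) \<in> polys_over atoms"
| atom: "a \<in> atoms \<Longrightarrow> a \<in> polys_over atoms"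
| add: "f \<in> polys_over atoms \<Longrightarrow> g \<in> polys_over atoms \<Longrightarrow> (\<lambda>x. f x + g x) \<in> polys_over atoms"
| mult: "f \<in> polys_over atoms \<Longrightarrow> g \<in> polys_over atoms \<Longrightarrow> (\<lambda>x. f x * g x) \<in> polys_over atoms"

definition regular_on :: "('x \<Rightarrow> 'k::field) set \<Rightarrow> 'x set \<Rightarrow> ('x \<Rightarrow> 'k) \<Rightarrow> bool" where
  "regular_on atoms X f \<longleftrightarrow>
     (\<forall>x\<in>X. \<exists>g\<in>polys_over atoms. \<exists>h\<in>polys_over atoms. h x \<noteq> 0 \<and>
        (\<forall>y\<in>X. h y \<noteq> 0 \<longrightarrow> f y = g y / h y))"

definition rep_coords :: "(('a \<Rightarrow> nat \<Rightarrow> nat \<Rightarrow> 'k::field) \<Rightarrow> 'k) set" where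
  "rep_coords = {(\<lambda>x. x \<alpha> j k) | \<alpha> j k. True}"

definition zariski_closed_rep :: "'a set \<Rightarrow> ('a \<Rightarrow> nat) \<Rightarrow> ('a \<Rightarrow> nat) \<Rightarrow> (nat \<Rightarrow> nat)
                    \<Rightarrow> ('a \<Rightarrow> nat \<Rightarrow> nat \<Rightarrow> 'k::field) set \<Rightarrow> bool" where
  "zariski_closed_rep Q1 src tgt d Z \<longleftrightarrow>
     (\<exists>G \<subseteq> polys_over rep_coords. Z = {x \<in> rep_ambient Q1 src tgt d. \<forall>g\<in>G. g x = 0})"

(* Grassmannian of subspaces W of V (here V = Phat, W containing I Phat, which
   amounts to the Grassmannian of subspaces of P = Phat / I Phat).
   Standard affine charts: for a finite set S of vectors, U_S = {W. S is a basis mod W};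
   the chart coordinates of W are the coefficients of v + W in the basis S + W. *)
definition in_chart :: "('x \<Rightarrow> 'k::field) set \<Rightarrow> ('x \<Rightarrow> 'k) set \<Rightarrow> ('x \<Rightarrow> 'k) set \<Rightarrow> bool" where
  "in_chart V S W \<longleftrightarrow> S \<subseteq> V \<and> indep_mod W S \<and> spans_mod W V S"

definition chart_coord :: "('x \<Rightarrow> 'k::field) set \<Rightarrow> ('x \<Rightarrow> 'k) \<Rightarrow> ('x \<Rightarrow> 'k) \<Rightarrow> ('x \<Rightarrow> 'k) set \<Rightarrow> 'k" where
  "chart_coord S v s W =
     (THE c. (\<forall>b. b \<notin> S \<longrightarrow> c b = 0) \<and> (\<lambda>y. v y - lincomb c S y) \<in> W) s"

definition chart_atoms :: "('x \<Rightarrow> 'k::field) set \<Rightarrow> ('x \<Rightarrow> 'k) set \<Rightarrow> (('x \<Rightarrow> 'k) set \<Rightarrow> 'k) set" where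
  "chart_atoms V S = {chart_coord S v s | v s. v \<in> V \<and> s \<in> S}"

definition gr_regular_on :: "('x \<Rightarrow> 'k::field) set \<Rightarrow> ('x \<Rightarrow> 'k) set set \<Rightarrow> (('x \<Rightarrow> 'k) set \<Rightarrow> 'k) \<Rightarrow> bool" where
  "gr_regular_on V X f \<longleftrightarrow>
     (\<forall>W\<in>X. \<exists>S. in_chart V S W \<and>
        (\<exists>g\<in>polys_over (chart_atoms V S). \<exists>h\<in>polys_over (chart_atoms V S). h W \<noteq> 0 \<and>
           (\<forall>W'\<in>X. in_chart V S W' \<longrightarrow> h W' \<noteq> 0 \<longrightarrow> f W' = g W' / h W')))"

definition gr_to_rep_morphism :: "('x \<Rightarrow> 'k::field) set \<Rightarrow> ('x \<Rightarrow> 'k) set set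
                    \<Rightarrow> (('x \<Rightarrow> 'k) set \<Rightarrow> 'a \<Rightarrow> nat \<Rightarrow> nat \<Rightarrow> 'k) \<Rightarrow> bool" where
  "gr_to_rep_morphism V X \<phi> \<longleftrightarrow> (\<forall>\<alpha> j k. gr_regular_on V X (\<lambda>W. \<phi> W \<alpha> j k))"

definition rep_to_gr_morphism :: "('x \<Rightarrow> 'k::field) set \<Rightarrow> ('a \<Rightarrow> nat \<Rightarrow> nat \<Rightarrow> 'k) set
                    \<Rightarrow> (('a \<Rightarrow> nat \<Rightarrow> nat \<Rightarrow> 'k) \<Rightarrow> ('x \<Rightarrow> 'k) set) \<Rightarrow> bool" where
  "rep_to_gr_morphism V Z \<psi> \<longleftrightarrow>
     (\<forall>z\<in>Z. \<exists>S. \<exists>h\<in>polys_over rep_coords. h z \<noteq> 0 \<and>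
        (\<forall>z'\<in>Z. h z' \<noteq> 0 \<longrightarrow> in_chart V S (\<psi> z')) \<and>
        (\<forall>v\<in>V. \<forall>s\<in>S. regular_on rep_coords {z'\<in>Z. h z' \<noteq> 0} (\<lambda>z'. chart_coord S v s (\<psi> z'))))"

end

theory Submission
  imports Defs "HOL-Library.Function_Algebras"
begin

definition subsp :: "('x \<Rightarrow> 'k::field) set \<Rightarrow> bool" where
  "subsp W \<longleftrightarrow> (\<lambda>_. 0) \<in> W \<and> (\<forall>u\<in>W. \<forall>w\<in>W. (\<lambda>y. u y + w y) \<in> W) \<and> (\<forall>u\<in>W. \<forall>c. (\<lambda>y. c * u y) \<in> W)"

lemma subsp_zero: "subsp W \<Longrightarrow> (\<lambda>_. 0) \<in> W" by (simp add: subsp_def)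
lemma subsp_add: "subsp W \<Longrightarrow> u \<in> W \<Longrightarrow> w \<in> W \<Longrightarrow> (\<lambda>y. u y + w y) \<in> W" by (simp add: subsp_def)
lemma subsp_smult: "subsp W \<Longrightarrow> u \<in> W \<Longrightarrow> (\<lambda>y. c * u y) \<in> W" by (simp add: subsp_def)
lemma subsp_diff: assumes "subsp W" "u \<in> W" "w \<in> W" shows "(\<lambda>y. u y - w y) \<in> W"
proof -
  have "(\<lambda>y. (-1) * w y) \<in> W" using assms subsp_smult by blast
  from subsp_add[OF assms(1,2) this] show ?thesis by simp
qed
lemma subsp_eqI: "subsp W \<Longrightarrow> u \<in> W \<Longrightarrow> u = w \<Longrightarrow> w \<in> W" by simp

lemma subsp_sum:
  assumes "subsp W" "finite F" "\<forall>z\<in>F. w z \<in> W"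
  shows "(\<lambda>y. \<Sum>z\<in>F. a z * w z y) \<in> W"
  using assms(2,3)
proof (induction F rule: finite_induct)
  case empty then show ?case using subsp_zero[OF assms(1)] by simp
next
  case (insert x F)
  have "(\<lambda>y. a x * w x y) \<in> W" using insert subsp_smult[OF assms(1)] by blast
  from subsp_add[OF assms(1) this insert.IH] insert show ?case by simp
qed

lemma subsp_sum1:
  assumes "subsp W" "finite F" "\<forall>z\<in>F. w z \<in> W"
  shows "(\<lambda>y. \<Sum>z\<in>F. w z y) \<in> W"
  using subsp_sum[OF assms, of "\<lambda>_. 1"] by simp

lemma is_subspace_subsp: "is_subspace V W \<Longrightarrow> subsp W"
  by (simp add: is_subspace_def subsp_def)

lemma lincomb_cong: "(\<And>b. b \<in> B \<Longrightarrow> c b = c' b) \<Longrightarrow> lincomb c B = lincomb c' B"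
  by (auto simp: lincomb_def intro!: sum.cong)

lemma lincomb_diff: "lincomb c B y - lincomb c' B y = lincomb (\<lambda>b. c b - c' b) B y"
  by (simp add: lincomb_def sum_subtractf left_diff_distrib)

lemma lincomb_add: "lincomb c B y + lincomb c' B y = lincomb (\<lambda>b. c b + c' b) B y"
  by (simp add: lincomb_def sum.distrib distrib_right)

lemma lincomb_subset:
  assumes "finite B" "S \<subseteq> B"
  shows "lincomb c S = lincomb (\<lambda>b. if b \<in> S then c b else 0) B"
  unfolding lincomb_def
  by (rule ext, rule sum.mono_neutral_cong_left) (use assms in \<open>auto intro: finite_subset\<close>)

lemma lincomb_zero: "lincomb (\<lambda>_. 0) B = (\<lambda>_. 0)"
  by (simp add: lincomb_def)

lemma coord_unique:
  assumes W: "subsp W" and ind: "indep_mod W B" and v: "(\<lambda>y. v y - lincomb c B y) \<in> W" and s: "s \<in> B"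
  shows "chart_coord B v s W = c s"
proof -
  define c0 where "c0 = (\<lambda>b. if b \<in> B then c b else 0)"
  have lc0: "lincomb c0 B = lincomb c B" by (rule lincomb_cong) (simp add: c0_def)
  let ?P = "\<lambda>c'. (\<forall>b. b \<notin> B \<longrightarrow> c' b = 0) \<and> (\<lambda>y. v y - lincomb c' B y) \<in> W"
  have P0: "?P c0" using v lc0 by (simp add: c0_def)
  have uniq: "c' = c0" if "?P c'" for c'
  proof -
    have "(\<lambda>y. (v y - lincomb c' B y) - (v y - lincomb c0 B y)) \<in> W"
      using subsp_diff[OF W] that P0 by blast
    then have "(\<lambda>y. lincomb (\<lambda>b. c0 b - c' b) B y) \<in> W"
      by (simp add: lincomb_diff[symmetric])
    then have "\<forall>b\<in>B. c0 b - c' b = 0" using ind unfolding indep_mod_def by auto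
    then show ?thesis using that by (auto simp: c0_def)
  qed
  have "(THE c'. ?P c') = c0" using P0 uniq by (rule the_equality)
  then show ?thesis unfolding chart_coord_def using s by (simp add: c0_def)
qed

lemma coord_spec:
  assumes W: "subsp W" and ind: "indep_mod W B" and sp: "spans_mod W U B" and v: "v \<in> U"
  shows "(\<lambda>y. v y - lincomb (\<lambda>s. chart_coord B v s W) B y) \<in> W"
proof -
  obtain c where c: "(\<lambda>y. v y - lincomb c B y) \<in> W" using sp v unfolding spans_mod_def by blast
  have "lincomb (\<lambda>s. chart_coord B v s W) B = lincomb c B"
    by (rule lincomb_cong) (rule coord_unique[OF W ind c])
  then show ?thesis using c by simp
qed


lemma sum_fun_apply: "(\<Sum>s\<in>S. f s) b = (\<Sum>s\<in>S. f s b)"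
  by (induction S rule: infinite_finite_induct) auto

definition fsc :: "'k::field \<Rightarrow> ('b \<Rightarrow> 'k) \<Rightarrow> ('b \<Rightarrow> 'k)" where
  "fsc c f = (\<lambda>z. c * f z)"

interpretation FV: vector_space fsc
  by unfold_locales (auto simp: fsc_def fun_eq_iff algebra_simps)

lemma fsc_apply[simp]: "fsc c f z = c * f z" by (simp add: fsc_def)

lemma steinitz_mod:
  fixes W U B S :: "('x \<Rightarrow> 'k::field) set"
  assumes W: "subsp W" and finB: "finite B" and indB: "indep_mod W B" and spB: "spans_mod W U B"
    and SU: "S \<subseteq> U" and indS: "indep_mod W S" and cardS: "card S = card B"
  shows "spans_mod W U S"
proof -
  have finS: "finite S" using indS by (simp add: indep_mod_def)
  define \<kappa> where "\<kappa> v = (\<lambda>b. if b \<in> B then chart_coord B v b W else 0)" for v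
  have lk: "lincomb (\<kappa> v) B = lincomb (\<lambda>s. chart_coord B v s W) B" for v
    by (rule lincomb_cong) (simp add: \<kappa>_def)
  have kap: "(\<lambda>y. v y - lincomb (\<kappa> v) B y) \<in> W" if "v \<in> U" for v
    using coord_spec[OF W indB spB that] lk by simp
  define E where "E = (\<lambda>b. (\<lambda>b'. if b' = b then (1::'k) else 0)) ` B"
  have finE: "finite E" using finB by (simp add: E_def)
  have cardE: "card E \<le> card B" unfolding E_def by (rule card_image_le[OF finB])
  have kspan: "\<kappa> v \<in> FV.span E" for v
  proof -
    have "\<kappa> v = (\<Sum>b\<in>B. fsc (\<kappa> v b) (\<lambda>b'. if b' = b then 1 else 0))"
      by (rule ext) (auto simp: sum_fun_apply \<kappa>_def finB if_distrib cong: if_cong)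
    also have "\<dots> \<in> FV.span E"
      by (intro FV.span_sum FV.span_scale FV.span_base) (auto simp: E_def)
    finally show ?thesis .
  qed
  have key: "\<forall>s\<in>S. a s = 0" if h: "(\<Sum>s\<in>S. fsc (a s) (\<kappa> s)) = 0" for a
  proof -
    have "(\<lambda>y. \<Sum>s\<in>S. a s * (s y - lincomb (\<kappa> s) B y)) \<in> W"
      by (rule subsp_sum[OF W finS]) (use kap SU in auto)
    moreover have "(\<lambda>y. \<Sum>s\<in>S. a s * (s y - lincomb (\<kappa> s) B y)) = lincomb a S"
    proof
      fix y
      have "(\<Sum>s\<in>S. a s * lincomb (\<kappa> s) B y) = (\<Sum>b\<in>B. (\<Sum>s\<in>S. a s * \<kappa> s b) * b y)"
        unfolding lincomb_def sum_distrib_left sum_distrib_right mult.assoc by (rule sum.swap)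
      also have "\<dots> = 0"
      proof -
        have "(\<Sum>s\<in>S. a s * \<kappa> s b) = 0" for b
          using fun_cong[OF h, of b] by (simp add: sum_fun_apply)
        then show ?thesis by simp
      qed
      finally show "(\<Sum>s\<in>S. a s * (s y - lincomb (\<kappa> s) B y)) = lincomb a S y"
        by (simp add: right_diff_distrib sum_subtractf lincomb_def)
    qed
    ultimately have "lincomb a S \<in> W" by simp
    then show ?thesis using indS unfolding indep_mod_def by blast
  qed
  have inj: "inj_on \<kappa> S"
  proof (rule inj_onI, rule ccontr)
    fix s1 s2 assume s: "s1 \<in> S" "s2 \<in> S" "\<kappa> s1 = \<kappa> s2" "s1 \<noteq> s2"
    define a where "a s = (if s = s1 then (1::'k) else if s = s2 then -1 else 0)" for s
    have "(\<Sum>s\<in>S. fsc (a s) (\<kappa> s)) = (\<Sum>s\<in>{s1,s2}. fsc (a s) (\<kappa> s))"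
      by (rule sum.mono_neutral_right) (use s finS in \<open>auto simp: a_def fsc_def fun_eq_iff\<close>)
    also have "\<dots> = 0" using s by (auto simp: a_def fsc_def fun_eq_iff)
    finally have "\<forall>s\<in>S. a s = 0" by (rule key)
    then show False using s by (auto simp: a_def)
  qed
  define K where "K = \<kappa> ` S"
  have finK: "finite K" using finS by (simp add: K_def)
  have cardK: "card K = card B" unfolding K_def using card_image[OF inj] cardS by (rule trans)
  have sumK: "(\<Sum>v\<in>K. g v) = (\<Sum>s\<in>S. g (\<kappa> s))" for g :: "(('x \<Rightarrow> 'k) \<Rightarrow> 'k) \<Rightarrow> (('x \<Rightarrow> 'k) \<Rightarrow> 'k)"
    unfolding K_def using sum.reindex[OF inj, of g] unfolding comp_def .
  have indK: "FV.independent K"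
  proof -
    have "\<not> FV.dependent K"
    proof
      assume dK: "FV.dependent K"
      obtain u where u: "\<exists>v\<in>K. u v \<noteq> 0" "(\<Sum>v\<in>K. fsc (u v) v) = 0"
        using iffD1[OF FV.dependent_finite[OF finK] dK] by (elim exE conjE) 
      have "(\<Sum>s\<in>S. fsc (u (\<kappa> s)) (\<kappa> s)) = 0" using u(2) sumK[of "\<lambda>v. fsc (u v) v"] by simp
      then have "\<forall>s\<in>S. u (\<kappa> s) = 0" by (rule key)
      then show False using u(1) by (auto simp: K_def)
    qed
    then show ?thesis by simp
  qed
  have KE: "K \<subseteq> FV.span E" using kspan by (auto simp: K_def)
  have EK: "E \<subseteq> FV.span K"
  proof
    fix w assume w: "w \<in> E"
    show "w \<in> FV.span K"
    proof (rule ccontr)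
      assume nw: "w \<notin> FV.span K"
      have "FV.independent (insert w K)" by (rule FV.independent_insertI[OF nw indK])
      moreover have "insert w K \<subseteq> FV.span E" using KE w FV.span_base by blast
      ultimately have "card (insert w K) \<le> card E" using FV.independent_span_bound[OF finE] by blast
      moreover have "w \<notin> K" using nw FV.span_base by blast
      ultimately show False using finK cardK cardE by simp
    qed
  qed
  have spanK: "\<kappa> v \<in> FV.span K" for v
    using kspan[of v] FV.span_mono[OF EK] FV.span_span by blast
  show ?thesis unfolding spans_mod_def
  proof
    fix u assume uU: "u \<in> U"
    obtain g where g: "\<kappa> u = (\<Sum>v\<in>K. fsc (g v) v)"
      using spanK[of u] FV.span_finite[OF finK] by auto
    define a where "a s = g (\<kappa> s)" for s
    have ka: "\<kappa> u = (\<Sum>s\<in>S. fsc (a s) (\<kappa> s))" using g sumK[of "\<lambda>v. fsc (g v) v"] by (simp add: a_def)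
    have A: "(\<lambda>y. \<Sum>s\<in>S. a s * (lincomb (\<kappa> s) B y - s y)) \<in> W"
    proof (rule subsp_sum[OF W finS], intro ballI)
      fix s assume "s \<in> S"
      then have "(\<lambda>y. s y - lincomb (\<kappa> s) B y) \<in> W" using kap SU by auto
      from subsp_smult[OF W this, of "-1"] show "(\<lambda>y. lincomb (\<kappa> s) B y - s y) \<in> W" by simp
    qed
    have "(\<lambda>y. (u y - lincomb (\<kappa> u) B y) + (\<Sum>s\<in>S. a s * (lincomb (\<kappa> s) B y - s y))) \<in> W"
      by (rule subsp_add[OF W kap[OF uU] A])
    moreover have "(\<lambda>y. (u y - lincomb (\<kappa> u) B y) + (\<Sum>s\<in>S. a s * (lincomb (\<kappa> s) B y - s y)))
        = (\<lambda>y. u y - lincomb a S y)"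
    proof
      fix y
      have "(\<Sum>s\<in>S. a s * lincomb (\<kappa> s) B y) = (\<Sum>b\<in>B. (\<Sum>s\<in>S. a s * \<kappa> s b) * b y)"
        unfolding lincomb_def sum_distrib_left sum_distrib_right mult.assoc by (rule sum.swap)
      also have "\<dots> = lincomb (\<kappa> u) B y"
        unfolding lincomb_def using ka by (simp add: sum_fun_apply)
      finally show "(u y - lincomb (\<kappa> u) B y) + (\<Sum>s\<in>S. a s * (lincomb (\<kappa> s) B y - s y)) = u y - lincomb a S y"
        by (simp add: right_diff_distrib sum_subtractf lincomb_def)
    qed
    ultimately show "\<exists>c. (\<lambda>y. u y - lincomb c S y) \<in> W" by auto
  qed
qed


lemma pend_simps[simp]: "pend tgt (i, []) = i" "pend tgt (i, as @ [\<alpha>]) = tgt \<alpha>"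
  by (auto simp: pend_def)

lemma pend_append: "pend tgt (i, as @ bs) = pend tgt (pend tgt (i, as), bs)"
  by (cases bs rule: rev_cases) (auto simp: pend_def)

lemma plen_simps[simp]: "plen (i, as) = length as" by (simp add: plen_def)

lemma valid_nil[simp]: "valid_path n Q1 src tgt (i, []) \<longleftrightarrow> i < n"
  by (simp add: valid_path_def)

lemma valid_snoc:
  "valid_path n Q1 src tgt (i, as @ [\<alpha>]) \<longleftrightarrow>
     valid_path n Q1 src tgt (i, as) \<and> \<alpha> \<in> Q1 \<and> src \<alpha> = pend tgt (i, as)"
proof -
  have A: "(\<forall>k<length as. src ((as @ [\<alpha>]) ! k) = (if k = 0 then i else tgt ((as @ [\<alpha>]) ! (k - 1))))
      \<longleftrightarrow> (\<forall>k<length as. src (as ! k) = (if k = 0 then i else tgt (as ! (k - 1))))"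
    by (intro all_cong1 imp_cong refl) (auto simp: nth_append)
  have B: "src ((as @ [\<alpha>]) ! length as) = (if length as = 0 then i else tgt ((as @ [\<alpha>]) ! (length as - 1)))
      \<longleftrightarrow> src \<alpha> = pend tgt (i, as)"
    by (cases as rule: rev_cases) (simp_all add: pend_def nth_append)
  show ?thesis
    unfolding valid_path_def fst_conv snd_conv length_append_singleton All_less_Suc A B
    by auto
qed

lemma valid_pend_lt:
  assumes Qv: "\<forall>\<alpha>\<in>Q1. src \<alpha> < n \<and> tgt \<alpha> < n" and v: "valid_path n Q1 src tgt p"
  shows "pend tgt p < n"
proof (cases p)
  case (Pair i as)
  then show ?thesis using v Qv
    by (cases as rule: rev_cases) (auto simp: valid_snoc)
qed

lemma valid_append:
  assumes Qv: "\<forall>\<alpha>\<in>Q1. src \<alpha> < n \<and> tgt \<alpha> < n"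
  shows "valid_path n Q1 src tgt (i, as @ bs) \<longleftrightarrow>
     valid_path n Q1 src tgt (i, as) \<and> valid_path n Q1 src tgt (pend tgt (i, as), bs)"
proof (induction bs rule: rev_induct)
  case Nil
  then show ?case using valid_pend_lt[OF Qv, of "(i, as)"] by auto
next
  case (snoc \<alpha> bs)
  then show ?case using pend_append[of tgt i as bs]
    by (simp add: valid_snoc append_assoc[symmetric] del: append_assoc)
qed

definition unitv :: "(nat \<times> 'a qpath \<Rightarrow> nat) \<Rightarrow> ('a \<Rightarrow> nat) \<Rightarrow> nat \<times> 'a qpath \<Rightarrow> nat \<Rightarrow> nat \<Rightarrow> 'k::field" where
  "unitv ix tgt b = (\<lambda>i a. if i = pend tgt (snd b) \<and> a = ix b then 1 else 0)"

locale qs =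
  fixes n :: nat and Q1 :: "'a set" and src tgt :: "'a \<Rightarrow> nat"
    and I :: "('a qpath \<Rightarrow> 'k::field) set"
    and L t :: nat and e :: "nat \<Rightarrow> nat"
    and m :: "nat \<Rightarrow> nat \<Rightarrow> nat" and d :: "nat \<Rightarrow> nat"
    and \<sigma> :: "(nat \<times> 'a qpath) set"
  assumes finQ: "finite Q1" and Qv: "\<forall>\<alpha>\<in>Q1. src \<alpha> < n \<and> tgt \<alpha> < n"
    and adm: "admissible n Q1 src tgt I"
    and loewy1: "Rpow n Q1 src tgt (Suc L) \<subseteq> I"
    and topv: "\<forall>r<t. e r < n"
    and skel: "is_skeleton n Q1 src tgt t e L m \<sigma>"
    and dimvec: "\<forall>i<n. d i = (\<Sum>l\<le>L. m l i)"
begin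

abbreviation "valid \<equiv> valid_path n Q1 src tgt"
abbreviation "V \<equiv> Phat n Q1 src tgt t e :: (nat \<times> 'a qpath \<Rightarrow> 'k) set"
abbreviation "pnd \<equiv> pend tgt"

definition good :: "nat \<times> 'a qpath \<Rightarrow> bool" where
  "good y \<longleftrightarrow> fst y < t \<and> valid (snd y) \<and> fst (snd y) = e (fst y)"

lemma pnd_lt: "valid p \<Longrightarrow> pnd p < n" using valid_pend_lt[OF Qv] .

lemma valid_app: "valid (i, as @ bs) \<longleftrightarrow> valid (i, as) \<and> valid (pnd (i, as), bs)"
  using valid_append[OF Qv] .

lemma sig_good: "b \<in> \<sigma> \<Longrightarrow> good b \<and> plen (snd b) \<le> L"
  using skel unfolding is_skeleton_def good_def by (cases b) auto

lemma z_in: "r < t \<Longrightarrow> (r, (e r, [])) \<in> \<sigma>"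
  using skel unfolding is_skeleton_def by auto

lemma sig_closed: "(r, (i, as)) \<in> \<sigma> \<Longrightarrow> k \<le> length as \<Longrightarrow> (r, (i, take k as)) \<in> \<sigma>"
  using skel unfolding is_skeleton_def by blast

lemma sig_card: "l \<le> L \<Longrightarrow> i < n \<Longrightarrow> card {b\<in>\<sigma>. plen (snd b) = l \<and> pnd (snd b) = i} = m l i"
proof -
  assume "l \<le> L" "i < n"
  then have "card {(r, p) \<in> \<sigma>. plen p = l \<and> pend tgt p = i} = m l i"
    using skel unfolding is_skeleton_def by blast
  moreover have "{(r, p) \<in> \<sigma>. plen p = l \<and> pend tgt p = i} = {b\<in>\<sigma>. plen (snd b) = l \<and> pnd (snd b) = i}"
    by auto
  ultimately show ?thesis by simp
qed

lemma fin_sig: "finite \<sigma>"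
proof -
  have "\<sigma> \<subseteq> {..<t} \<times> ({..<n} \<times> {as. set as \<subseteq> Q1 \<and> length as \<le> L})"
  proof
    fix b assume "b \<in> \<sigma>"
    then show "b \<in> {..<t} \<times> ({..<n} \<times> {as. set as \<subseteq> Q1 \<and> length as \<le> L})"
      using sig_good[of b] unfolding good_def valid_path_def plen_def by (cases b) auto
  qed
  moreover have "finite ({..<t} \<times> ({..<n} \<times> {as. set as \<subseteq> Q1 \<and> length as \<le> L}))"
    using finite_lists_length_le[OF finQ] by auto
  ultimately show ?thesis by (rule finite_subset)
qed

definition sig :: "nat \<Rightarrow> (nat \<times> 'a qpath) set" where
  "sig i = {b\<in>\<sigma>. pnd (snd b) = i}"

lemma card_sig: "i < n \<Longrightarrow> card (sig i) = d i"
proof -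
  assume i: "i < n"
  have "sig i = (\<Union>l\<in>{..L}. {b\<in>\<sigma>. plen (snd b) = l \<and> pnd (snd b) = i})"
    using sig_good by (auto simp: sig_def)
  then have "card (sig i) = (\<Sum>l\<le>L. card {b\<in>\<sigma>. plen (snd b) = l \<and> pnd (snd b) = i})"
    by (simp, intro card_UN_disjoint) (auto intro: finite_subset[OF _ fin_sig])
  also have "\<dots> = (\<Sum>l\<le>L. m l i)" using sig_card i by simp
  finally show ?thesis using dimvec i by simp
qed

definition bas :: "nat \<Rightarrow> nat \<Rightarrow> nat \<times> 'a qpath" where
  "bas i = (SOME h. bij_betw h {..<card (sig i)} (sig i))"

lemma bas_bij: "bij_betw (bas i) {..<card (sig i)} (sig i)"
proof -
  have "finite (sig i)" using fin_sig by (simp add: sig_def)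
  then obtain h where "bij_betw h {0..<card (sig i)} (sig i)" using ex_bij_betw_nat_finite by blast
  then have "\<exists>h. bij_betw h {..<card (sig i)} (sig i)" by (auto simp: lessThan_atLeast0)
  then show ?thesis unfolding bas_def by (rule someI_ex)
qed

definition ix :: "nat \<times> 'a qpath \<Rightarrow> nat" where
  "ix b = inv_into {..<card (sig (pnd (snd b)))} (bas (pnd (snd b))) b"

lemma sig_pnd: "b \<in> \<sigma> \<Longrightarrow> pnd (snd b) < n"
  using sig_good[of b] pnd_lt by (auto simp: good_def)

lemma ix_lt: "b \<in> \<sigma> \<Longrightarrow> ix b < d (pnd (snd b))"
proof -
  assume b: "b \<in> \<sigma>"
  have "b \<in> sig (pnd (snd b))" using b by (simp add: sig_def)
  then have "ix b \<in> {..<card (sig (pnd (snd b)))}"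
    unfolding ix_def using bas_bij bij_betw_inv_into bij_betwE by metis
  then show ?thesis using card_sig[OF sig_pnd[OF b]] by simp
qed

lemma bas_ix: "b \<in> \<sigma> \<Longrightarrow> bas (pnd (snd b)) (ix b) = b"
proof -
  assume b: "b \<in> \<sigma>"
  have "b \<in> sig (pnd (snd b))" using b by (simp add: sig_def)
  then show ?thesis unfolding ix_def using bas_bij bij_betw_inv_into_right by metis
qed

lemma bas_in: "i < n \<Longrightarrow> a < d i \<Longrightarrow> bas i a \<in> \<sigma> \<and> pnd (snd (bas i a)) = i"
proof -
  assume i: "i < n" "a < d i"
  then have "bas i a \<in> sig i" using bas_bij card_sig bij_betwE by fastforce
  then show ?thesis by (simp add: sig_def)
qed

lemma ix_bas: "i < n \<Longrightarrow> a < d i \<Longrightarrow> ix (bas i a) = a"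
proof -
  assume i: "i < n" "a < d i"
  have p: "pnd (snd (bas i a)) = i" using bas_in[OF i] by simp
  have "a \<in> {..<card (sig i)}" using i card_sig by simp
  then show ?thesis unfolding ix_def p using bas_bij bij_betw_inv_into_left by metis
qed

lemma ix_inj: "b \<in> \<sigma> \<Longrightarrow> b' \<in> \<sigma> \<Longrightarrow> pnd (snd b) = pnd (snd b') \<Longrightarrow> ix b = ix b' \<Longrightarrow> b = b'"
  by (metis bas_ix)

end


definition supp :: "('x \<Rightarrow> 'k::zero) \<Rightarrow> 'x set" where "supp u = {y. u y \<noteq> 0}"

definition pth :: "'a qpath \<Rightarrow> 'a qpath \<Rightarrow> 'k::field" where
  "pth q = (\<lambda>p. if p = q then 1 else 0)"

definition cat :: "nat \<times> 'a qpath \<Rightarrow> 'a qpath \<Rightarrow> nat \<times> 'a qpath" where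
  "cat y q = (fst y, (fst (snd y), snd (snd y) @ snd q))"

lemma if_conj_distrib_hack: "(x = (if A \<and> B then (1::'k::field) else 0)) \<Longrightarrow> x = (if A then (if B then 1 else 0) else 0)"
  by auto

lemma decomp_gen:
  assumes "finite F" "supp u \<subseteq> F"
  shows "u = (\<lambda>z. \<Sum>y\<in>F. u y * path_vec y z)"
proof
  fix z
  have "(\<Sum>y\<in>F. u y * path_vec y z) = (\<Sum>y\<in>F. if y = z then u z else 0)"
    by (rule sum.cong) (auto simp: path_vec_def)
  also have "\<dots> = u z" using assms by (auto simp: supp_def)
  finally show "u z = (\<Sum>y\<in>F. u y * path_vec y z)" by simp
qed

lemma decompf_gen:
  assumes "finite F" "supp f \<subseteq> F"
  shows "f = (\<lambda>p. \<Sum>q\<in>F. f q * pth q p)"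
proof
  fix p
  have "(\<Sum>q\<in>F. f q * pth q p) = (\<Sum>q\<in>F. if q = p then f p else 0)"
    by (rule sum.cong) (auto simp: pth_def)
  also have "\<dots> = f p" using assms by (auto simp: supp_def)
  finally show "f p = (\<Sum>q\<in>F. f q * pth q p)" by simp
qed

lemma pact_lin_right:
  "pact tgt f (\<lambda>z. \<Sum>w\<in>F. a w * g w z) = (\<lambda>z. \<Sum>w\<in>F. a w * pact tgt f (g w) z)"
  unfolding pact_def pmult_def
  by (rule ext) (simp add: sum_distrib_right sum_distrib_left mult.assoc sum.swap[of _ F])

lemma pact_lin_left:
  "pact tgt (\<lambda>p. \<Sum>q\<in>F. a q * f q p) x = (\<lambda>z. \<Sum>q\<in>F. a q * pact tgt (f q) x z)"
  unfolding pact_def pmult_def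
  by (rule ext) (simp add: sum_distrib_right sum_distrib_left mult.left_commute sum.swap[of _ F])

lemma pact_pth_pv:
  "pact tgt (pth q) (path_vec y) =
     (if fst q = pend tgt (snd y) then path_vec (cat y q) else (\<lambda>_. 0))"
proof (rule ext)
  fix z :: "nat \<times> 'a qpath"
  obtain r i as where y: "y = (r, (i, as))" by (cases y) auto
  obtain j bs where q: "q = (j, bs)" by (cases q) auto
  obtain r' i' cs where z: "z = (r', (i', cs))" by (cases z) auto
  let ?c = "r' = r \<and> i' = i \<and> cs = as @ bs \<and> j = pend tgt (i, as)"
  have tm: "path_vec y (r', (i', take k cs)) * pth q (pend tgt (i', take k cs), drop k cs)
      = (if k = length as then (if ?c then 1 else 0) else 0)" if "k \<le> length cs" for k
  proof -
    have eqv: "(r', (i', take k cs)) = y \<and> (pend tgt (i', take k cs), drop k cs) = q \<longleftrightarrow> k = length as \<and> ?c"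
    proof
      assume H: "(r', (i', take k cs)) = y \<and> (pend tgt (i', take k cs), drop k cs) = q"
      then have h: "r' = r" "i' = i" "take k cs = as" "drop k cs = bs" "pend tgt (i, take k cs) = j"
        by (auto simp: y q)
      have "k = length as" using h(3) that by auto
      moreover have "cs = as @ bs" using h(3,4) append_take_drop_id[of k cs] by simp
      ultimately show "k = length as \<and> ?c" using h by simp
    next
      assume H: "k = length as \<and> ?c"
      then show "(r', (i', take k cs)) = y \<and> (pend tgt (i', take k cs), drop k cs) = q"
        by (auto simp: y q)
    qed
    have "path_vec y (r', (i', take k cs)) * pth q (pend tgt (i', take k cs), drop k cs)
      = (if (r', (i', take k cs)) = y \<and> (pend tgt (i', take k cs), drop k cs) = q then 1 else 0)"
      by (simp add: path_vec_def pth_def)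
    also have "\<dots> = (if k = length as \<and> ?c then 1 else 0)" by (simp only: eqv)
    finally show ?thesis by (rule if_conj_distrib_hack)
  qed
  have "pact tgt (pth q) (path_vec y) z =
      (\<Sum>k\<le>length cs. if k = length as then (if ?c then 1 else 0) else 0)"
    unfolding pact_def pmult_def z by (simp add: tm)
  also have "\<dots> = (if ?c then 1 else 0)" by (auto simp: sum.delta')
  also have "\<dots> = (if fst q = pend tgt (snd y) then path_vec (cat y q) else (\<lambda>_. 0)) z"
    by (auto simp: y q z cat_def path_vec_def)
  finally show "pact tgt (pth q) (path_vec y) z =
      (if fst q = pend tgt (snd y) then path_vec (cat y q) else (\<lambda>_. 0)) z" .
qed

context qs
begin

lemma V_iff: "u \<in> V \<longleftrightarrow> finite (supp u) \<and> (\<forall>y. u y \<noteq> 0 \<longrightarrow> good y)"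
  unfolding Phat_def supp_def good_def by auto

lemma KQ_iff: "f \<in> KQ n Q1 src tgt \<longleftrightarrow> finite (supp f) \<and> (\<forall>q. f q \<noteq> 0 \<longrightarrow> valid q)"
  unfolding KQ_def supp_def by auto

lemma decomp: "u \<in> V \<Longrightarrow> u = (\<lambda>z. \<Sum>y\<in>supp u. u y * path_vec y z)"
  by (rule decomp_gen) (auto simp: V_iff)

lemma decompf: "f \<in> KQ n Q1 src tgt \<Longrightarrow> f = (\<lambda>p. \<Sum>q\<in>supp f. f q * pth q p)"
  by (rule decompf_gen) (auto simp: KQ_iff)

lemma comb_in_V:
  assumes "finite F" "\<forall>y\<in>F. good y"
  shows "(\<lambda>z. \<Sum>y\<in>F. c y * path_vec y z) \<in> V"
proof -
  have s: "supp (\<lambda>z. \<Sum>y\<in>F. c y * path_vec y z) \<subseteq> F"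
  proof
    fix z assume "z \<in> supp (\<lambda>z. \<Sum>y\<in>F. c y * path_vec y z)"
    then have "(\<Sum>y\<in>F. c y * path_vec y z) \<noteq> 0" by (simp add: supp_def)
    then obtain y where "y \<in> F" "c y * path_vec y z \<noteq> 0" by (meson sum.neutral)
    then show "z \<in> F" by (auto simp: path_vec_def split: if_splits)
  qed
  show ?thesis unfolding V_iff
    using s assms finite_subset[OF s] by (auto simp: supp_def)
qed

lemma pv_in_V: "good y \<Longrightarrow> path_vec y \<in> V"
  using comb_in_V[of "{y}" "\<lambda>_. 1"] by simp

lemma good_cat:
  assumes "good y" "valid q" "fst q = pnd (snd y)"
  shows "good (cat y q)"
  using assms valid_app[of "fst (snd y)" "snd (snd y)" "snd q"]
  by (cases y; cases q) (auto simp: good_def cat_def)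

lemma cat_simps[simp]: "fst (cat y q) = fst y" "fst (snd (cat y q)) = fst (snd y)"
  "plen (snd (cat y q)) = plen (snd y) + length (snd q)"
  by (auto simp: cat_def plen_def)

lemma pnd_cat: "fst q = pnd (snd y) \<Longrightarrow> pnd (snd (cat y q)) = pnd q"
  using pend_append[of tgt "fst (snd y)" "snd (snd y)" "snd q"]
  by (cases y; cases q) (auto simp: cat_def)

lemma pact_expand:
  assumes f: "f \<in> KQ n Q1 src tgt" and u: "u \<in> V"
  shows "pact tgt f u = (\<lambda>z. \<Sum>q\<in>supp f. f q * (\<Sum>y\<in>supp u. u y * pact tgt (pth q) (path_vec y) z))"
proof -
  have "pact tgt f u = pact tgt (\<lambda>p. \<Sum>q\<in>supp f. f q * pth q p) u"
    using decompf[OF f] by simp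
  also have "\<dots> = (\<lambda>z. \<Sum>q\<in>supp f. f q * pact tgt (pth q) u z)"
    by (rule pact_lin_left)
  also have "\<dots> = (\<lambda>z. \<Sum>q\<in>supp f. f q * (\<Sum>y\<in>supp u. u y * pact tgt (pth q) (path_vec y) z))"
  proof -
    have "pact tgt (pth q) u = (\<lambda>z. \<Sum>y\<in>supp u. u y * pact tgt (pth q) (path_vec y) z)" for q
      by (subst decomp[OF u]) (rule pact_lin_right)
    then show ?thesis by simp
  qed
  finally show ?thesis .
qed

end


lemma foldl_lin:
  fixes M :: "nat \<Rightarrow> nat \<Rightarrow> 'k::field" and x :: "'a \<Rightarrow> nat \<Rightarrow> nat \<Rightarrow> 'k"
  assumes M: "\<forall>c\<ge>D. M c b = 0"
  shows "foldl (\<lambda>M \<alpha>. \<lambda>j k. \<Sum>l<d (src \<alpha>). x \<alpha> j l * M l k) M bs a b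
       = (\<Sum>c<D. foldl (\<lambda>M \<alpha>. \<lambda>j k. \<Sum>l<d (src \<alpha>). x \<alpha> j l * M l k) (\<lambda>j k. if j = k then 1 else 0) bs a c * M c b)"
  (is "?F M bs a b = (\<Sum>c<D. ?F ?Id bs a c * M c b)")
proof (induction bs arbitrary: a rule: rev_induct)
  case Nil
  show ?case
  proof (cases "a < D")
    case True
    then have "(\<Sum>c<D. ?Id a c * M c b) = (\<Sum>c<D. if c = a then M a b else 0)"
      by (intro sum.cong) auto
    then show ?thesis using True by simp
  next
    case False
    then show ?thesis using M by auto
  qed
next
  case (snoc \<alpha> bs)
  have "?F M (bs @ [\<alpha>]) a b = (\<Sum>l<d (src \<alpha>). x \<alpha> a l * ?F M bs l b)" by simp
  also have "\<dots> = (\<Sum>l<d (src \<alpha>). x \<alpha> a l * (\<Sum>c<D. ?F ?Id bs l c * M c b))"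
    using snoc by simp
  also have "\<dots> = (\<Sum>c<D. (\<Sum>l<d (src \<alpha>). x \<alpha> a l * ?F ?Id bs l c) * M c b)"
    by (simp add: sum_distrib_left sum_distrib_right mult.assoc) (rule sum.swap)
  also have "\<dots> = (\<Sum>c<D. ?F ?Id (bs @ [\<alpha>]) a c * M c b)" by simp
  finally show ?case .
qed

lemma ev_snoc: "eval_path src d x (i, as @ [\<alpha>]) = (\<lambda>j k. \<Sum>l<d (src \<alpha>). x \<alpha> j l * eval_path src d x (i, as) l k)"
  by (simp add: eval_path_def)

lemma ev_nil: "eval_path src d x (i, []) = (\<lambda>j k. if j = k then 1 else 0)"
  by (simp add: eval_path_def)

lemma ev_snd: "eval_path src d x (i, as) = eval_path src d x (j, as)"
  by (simp add: eval_path_def)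

lemma ev_cat:
  assumes "\<forall>c\<ge>D. eval_path src d x (i, as) c b = 0"
  shows "eval_path src d x (i, as @ bs) a b = (\<Sum>c<D. eval_path src d x (j, bs) a c * eval_path src d x (i, as) c b)"
proof -
  let ?F = "\<lambda>M \<alpha>. \<lambda>j k. \<Sum>l<d (src \<alpha>). x \<alpha> j l * M l k"
  have "eval_path src d x (i, as @ bs) a b = foldl ?F (eval_path src d x (i, as)) bs a b"
    by (simp add: eval_path_def)
  also have "\<dots> = (\<Sum>c<D. foldl ?F (\<lambda>j k. if j = k then 1 else 0) bs a c * eval_path src d x (i, as) c b)"
    by (rule foldl_lin) (use assms in simp)
  finally show ?thesis by (simp add: eval_path_def)
qed

lemma ev_rows:
  assumes x: "x \<in> rep_ambient Q1 src tgt d" and c: "c \<ge> d (pend tgt (i, as))" and ne: "as \<noteq> [] \<or> b < d i"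
  shows "eval_path src d x (i, as) c b = 0"
proof (cases as rule: rev_cases)
  case Nil
  then show ?thesis using ne c by (simp add: ev_nil)
next
  case (snoc bs \<alpha>)
  have "x \<alpha> c l = 0" for l
  proof (rule ccontr)
    assume "x \<alpha> c l \<noteq> 0"
    then have "c < d (tgt \<alpha>)" using x unfolding rep_ambient_def by blast
    then show False using c snoc by simp
  qed
  then show ?thesis using snoc by (simp add: ev_snoc)
qed

definition restr :: "('a \<Rightarrow> nat) \<Rightarrow> nat \<Rightarrow> (nat \<times> 'a qpath \<Rightarrow> 'k::zero) \<Rightarrow> nat \<times> 'a qpath \<Rightarrow> 'k" where
  "restr tgt i u = (\<lambda>y. if pend tgt (snd y) = i then u y else 0)"

context qs
begin

lemma V_good: "u \<in> V \<Longrightarrow> u y \<noteq> 0 \<Longrightarrow> good y"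
  using V_iff by blast

lemma V_fin: "u \<in> V \<Longrightarrow> finite (supp u)"
  using V_iff by blast

lemma V_I: "finite (supp u) \<Longrightarrow> (\<And>y. u y \<noteq> 0 \<Longrightarrow> good y) \<Longrightarrow> u \<in> V"
  using V_iff by blast

lemma KQ_valid: "f \<in> KQ n Q1 src tgt \<Longrightarrow> f q \<noteq> 0 \<Longrightarrow> valid q"
  using KQ_iff by blast

lemma KQ_fin: "f \<in> KQ n Q1 src tgt \<Longrightarrow> finite (supp f)"
  using KQ_iff by blast

lemma subsp_V: "subsp V"
proof -
  have z: "(\<lambda>_. 0) \<in> V" by (rule V_I) (auto simp: supp_def)
  have a: "(\<lambda>y. u y + w y) \<in> V" if u: "u \<in> V" and w: "w \<in> V" for u w
  proof (rule V_I)
    have "supp (\<lambda>y. u y + w y) \<subseteq> supp u \<union> supp w" by (auto simp: supp_def)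
    then show "finite (supp (\<lambda>y. u y + w y))" using V_fin[OF u] V_fin[OF w] finite_subset by blast
    fix y assume "u y + w y \<noteq> 0"
    then have "u y \<noteq> 0 \<or> w y \<noteq> 0" by auto
    then show "good y" using V_good[OF u] V_good[OF w] by blast
  qed
  have s: "(\<lambda>y. c * u y) \<in> V" if u: "u \<in> V" for u c
  proof (rule V_I)
    have "supp (\<lambda>y. c * u y) \<subseteq> supp u" by (auto simp: supp_def)
    then show "finite (supp (\<lambda>y. c * u y))" using V_fin[OF u] finite_subset by blast
    fix y assume "c * u y \<noteq> 0"
    then show "good y" using V_good[OF u] by simp
  qed
  show ?thesis unfolding subsp_def using z a s by blast
qed

lemma pact_pv_in_V:
  assumes "good y" "valid q"
  shows "pact tgt (pth q) (path_vec y) \<in> V"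
proof (cases "fst q = pnd (snd y)")
  case True
  then show ?thesis using pv_in_V[OF good_cat[OF assms True]] by (simp add: pact_pth_pv)
next
  case False
  then show ?thesis using subsp_zero[OF subsp_V] by (simp add: pact_pth_pv)
qed

lemma pact_in_V:
  assumes f: "f \<in> KQ n Q1 src tgt" and u: "u \<in> V"
  shows "pact tgt f u \<in> V"
proof -
  have inner: "(\<lambda>z. \<Sum>y\<in>supp u. u y * pact tgt (pth q) (path_vec y) z) \<in> V" if q: "q \<in> supp f" for q
  proof (rule subsp_sum[OF subsp_V V_fin[OF u]], rule ballI)
    fix y assume "y \<in> supp u"
    then have "good y" using V_good[OF u] by (simp add: supp_def)
    moreover have "valid q" using q KQ_valid[OF f] by (simp add: supp_def)
    ultimately show "pact tgt (pth q) (path_vec y) \<in> V" by (rule pact_pv_in_V)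
  qed
  have "(\<lambda>z. \<Sum>q\<in>supp f. f q * (\<Sum>y\<in>supp u. u y * pact tgt (pth q) (path_vec y) z)) \<in> V"
    by (rule subsp_sum[OF subsp_V KQ_fin[OF f]]) (use inner in blast)
  then show ?thesis using pact_expand[OF f u] by simp
qed

lemma restr_sum: "u \<in> V \<Longrightarrow> u = (\<lambda>y. \<Sum>i<n. restr tgt i u y)"
proof
  fix y assume u: "u \<in> V"
  show "u y = (\<Sum>i<n. restr tgt i u y)"
  proof (cases "u y = 0")
    case True then show ?thesis by (simp add: restr_def)
  next
    case False
    then have "good y" using V_good[OF u] by simp
    then have "pnd (snd y) < n" using pnd_lt by (simp add: good_def)
    then show ?thesis by (simp add: restr_def sum.delta'[of "{..<n}"] if_distrib cong: if_cong)
  qed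
qed

lemma pact_ev: "u \<in> V \<Longrightarrow> pact tgt (pth (i, [])) u = restr tgt i u"
proof -
  assume u: "u \<in> V"
  have "pact tgt (pth (i, [])) u = (\<lambda>z. \<Sum>y\<in>supp u. u y * pact tgt (pth (i, [])) (path_vec y) z)"
    by (subst decomp[OF u]) (rule pact_lin_right)
  also have "\<dots> = (\<lambda>z. \<Sum>y\<in>supp u. restr tgt i u y * path_vec y z)"
    by (intro ext sum.cong refl) (auto simp: pact_pth_pv restr_def cat_def)
  also have "\<dots> = restr tgt i u"
    by (rule decomp_gen[symmetric]) (use u in \<open>auto simp: V_iff supp_def restr_def\<close>)
  finally show ?thesis .
qed

lemma restr_in_V: "u \<in> V \<Longrightarrow> restr tgt i u \<in> V"
  by (auto simp: V_iff restr_def supp_def intro: finite_subset)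

end


context qs
begin

abbreviation "RA \<equiv> rep_ambient Q1 src tgt d :: ('a \<Rightarrow> nat \<Rightarrow> nat \<Rightarrow> 'k) set"
abbreviation "ma \<equiv> mact n src tgt d"
abbreviation "ev \<equiv> eval_path src d"

definition iz :: "nat \<Rightarrow> nat" where "iz r = ix (r, (e r, []))"

definition Phi :: "('a \<Rightarrow> nat \<Rightarrow> nat \<Rightarrow> 'k) \<Rightarrow> nat \<times> 'a qpath \<Rightarrow> nat \<Rightarrow> nat \<Rightarrow> 'k" where
  "Phi x y = (\<lambda>i a. if i = pnd (snd y) \<and> i < n \<and> a < d i then ev x (snd y) a (iz (fst y)) else 0)"

definition Psi :: "('a \<Rightarrow> nat \<Rightarrow> nat \<Rightarrow> 'k) \<Rightarrow> (nat \<times> 'a qpath \<Rightarrow> 'k) \<Rightarrow> nat \<Rightarrow> nat \<Rightarrow> 'k" where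
  "Psi x u = (\<lambda>i a. \<Sum>y\<in>supp u. u y * Phi x y i a)"

abbreviation "uv \<equiv> unitv ix tgt :: nat \<times> 'a qpath \<Rightarrow> nat \<Rightarrow> nat \<Rightarrow> 'k"

lemma iz_lt: "r < t \<Longrightarrow> iz r < d (e r)"
  using ix_lt[OF z_in] by (simp add: iz_def)

lemma Psi_gen: "finite F \<Longrightarrow> supp u \<subseteq> F \<Longrightarrow> Psi x u = (\<lambda>i a. \<Sum>y\<in>F. u y * Phi x y i a)"
  unfolding Psi_def by (intro ext sum.mono_neutral_left) (auto simp: supp_def)

lemma Psi_pv: "Psi x (path_vec y) = Phi x y"
  by (subst Psi_gen[of "{y}"]) (auto simp: supp_def path_vec_def)

lemma Psi_comb:
  assumes F: "finite F" and g: "\<forall>w\<in>F. finite (supp (g w))"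
  shows "Psi x (\<lambda>z. \<Sum>w\<in>F. c w * g w z) = (\<lambda>i a. \<Sum>w\<in>F. c w * Psi x (g w) i a)"
proof -
  define G where "G = (\<Union>w\<in>F. supp (g w))"
  have fG: "finite G" using F g by (simp add: G_def)
  have "supp (\<lambda>z. \<Sum>w\<in>F. c w * g w z) \<subseteq> G"
    by (auto simp: G_def supp_def intro: ccontr)
  then have "Psi x (\<lambda>z. \<Sum>w\<in>F. c w * g w z) = (\<lambda>i a. \<Sum>y\<in>G. (\<Sum>w\<in>F. c w * g w y) * Phi x y i a)"
    by (rule Psi_gen[OF fG])
  also have "\<dots> = (\<lambda>i a. \<Sum>w\<in>F. c w * (\<Sum>y\<in>G. g w y * Phi x y i a))"
    by (simp add: sum_distrib_right sum_distrib_left mult.assoc sum.swap[of _ G])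
  also have "\<dots> = (\<lambda>i a. \<Sum>w\<in>F. c w * Psi x (g w) i a)"
  proof -
    have "Psi x (g w) = (\<lambda>i a. \<Sum>y\<in>G. g w y * Phi x y i a)" if "w \<in> F" for w
      by (rule Psi_gen[OF fG]) (use that in \<open>auto simp: G_def\<close>)
    then show ?thesis by (intro ext sum.cong) auto
  qed
  finally show ?thesis .
qed

lemma Psi_zero: "Psi x (\<lambda>_. 0) = (\<lambda>_ _. 0)"
  by (simp add: Psi_def supp_def)

lemma Psi_add:
  assumes "finite (supp u)" "finite (supp w)"
  shows "Psi x (\<lambda>y. u y + w y) = (\<lambda>i a. Psi x u i a + Psi x w i a)"
proof -
  let ?F = "supp u \<union> supp w"
  have f: "finite ?F" using assms by simp
  have "Psi x (\<lambda>y. u y + w y) = (\<lambda>i a. \<Sum>y\<in>?F. (u y + w y) * Phi x y i a)"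
    by (rule Psi_gen[OF f]) (auto simp: supp_def)
  moreover have "Psi x u = (\<lambda>i a. \<Sum>y\<in>?F. u y * Phi x y i a)" by (rule Psi_gen[OF f]) auto
  moreover have "Psi x w = (\<lambda>i a. \<Sum>y\<in>?F. w y * Phi x y i a)" by (rule Psi_gen[OF f]) auto
  ultimately show ?thesis by (simp add: distrib_right sum.distrib)
qed

lemma Psi_smult:
  assumes "finite (supp u)"
  shows "Psi x (\<lambda>y. c * u y) = (\<lambda>i a. c * Psi x u i a)"
proof -
  have "Psi x (\<lambda>y. c * u y) = (\<lambda>i a. \<Sum>y\<in>supp u. (c * u y) * Phi x y i a)"
    by (rule Psi_gen[OF assms]) (auto simp: supp_def)
  then show ?thesis by (simp add: Psi_def sum_distrib_left mult.assoc)
qed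

lemma Psi_diff:
  assumes "finite (supp u)" "finite (supp w)"
  shows "Psi x (\<lambda>y. u y - w y) = (\<lambda>i a. Psi x u i a - Psi x w i a)"
proof -
  have fw: "finite (supp (\<lambda>y. (-1) * w y))" using assms(2) by (simp add: supp_def)
  have "(\<lambda>y. u y - w y) = (\<lambda>y. u y + (-1) * w y)" by simp
  then show ?thesis using Psi_add[OF assms(1) fw] Psi_smult[OF assms(2), of x "-1"] by simp
qed

lemma Psi_Mvec: "Psi x u \<in> Mvec n d"
  unfolding Mvec_def Psi_def Phi_def
  by (auto intro: ccontr simp: if_distrib cong: if_cong)

lemma mact_gen:
  assumes "finite G" "supp f \<subseteq> G"
  shows "ma x f v = (\<lambda>j a. if j < n \<and> a < d j then
      (\<Sum>p\<in>G. if pnd p = j then f p * (\<Sum>b<d (fst p). ev x p a b * v (fst p) b) else 0) else 0)"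
proof (intro ext)
  fix j a
  have "{p. f p \<noteq> 0 \<and> pnd p = j} = {p\<in>G. f p \<noteq> 0 \<and> pnd p = j}" using assms(2) by (auto simp: supp_def)
  then have "(\<Sum>p\<in>{p. f p \<noteq> 0 \<and> pnd p = j}. f p * (\<Sum>b<d (fst p). ev x p a b * v (fst p) b))
      = (\<Sum>p\<in>G. if f p \<noteq> 0 \<and> pnd p = j then f p * (\<Sum>b<d (fst p). ev x p a b * v (fst p) b) else 0)"
    using sum.inter_filter[OF assms(1)] by simp
  also have "\<dots> = (\<Sum>p\<in>G. if pnd p = j then f p * (\<Sum>b<d (fst p). ev x p a b * v (fst p) b) else 0)"
    by (intro sum.cong) auto
  finally show "ma x f v j a = (if j < n \<and> a < d j then
      (\<Sum>p\<in>G. if pnd p = j then f p * (\<Sum>b<d (fst p). ev x p a b * v (fst p) b) else 0) else 0)"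
    unfolding mact_def by simp
qed

lemma mact_pth: "ma x (pth q) v = (\<lambda>j a. if j < n \<and> a < d j \<and> pnd q = j then
      (\<Sum>b<d (fst q). ev x q a b * v (fst q) b) else 0)"
  by (subst mact_gen[of "{q}"]) (auto simp: supp_def pth_def intro!: ext)

lemma mact_lin_f:
  assumes "finite (supp f)"
  shows "ma x f v = (\<lambda>j a. \<Sum>q\<in>supp f. f q * ma x (pth q) v j a)"
  by (subst mact_gen[OF assms subset_refl]) (auto simp: mact_pth sum_distrib_left intro!: ext sum.cong)

lemma mact_lin_v:
  "ma x f (\<lambda>i a. \<Sum>w\<in>F. c w * v w i a) = (\<lambda>j a. \<Sum>w\<in>F. c w * ma x f (v w) j a)"
  unfolding mact_def
  by (auto simp: sum_distrib_left sum_distrib_right mult.left_commute intro!: ext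
      sum.swap[of _ F] trans[OF sum.cong sum.swap[of _ F]])

end


context qs
begin

lemma hom1:
  assumes x: "x \<in> RA" and y: "good y" and q: "valid q"
  shows "Psi x (pact tgt (pth q) (path_vec y)) = ma x (pth q) (Phi x y)"
proof -
  obtain r i as where yy: "y = (r, (i, as))" by (cases y) auto
  obtain j bs where qq: "q = (j, bs)" by (cases q) auto
  have r: "r < t" and i: "i = e r" using y by (auto simp: good_def yy)
  have jn: "j < n" using q by (simp add: qq valid_path_def)
  show ?thesis
  proof (cases "j = pnd (i, as)")
    case True
    have pc: "pnd (snd (cat y q)) = pnd (j, bs)" using pnd_cat[of q y] True by (simp add: yy qq)
    have rows: "\<forall>c\<ge>d (pnd (i, as)). ev x (i, as) c (iz r) = 0"
      using ev_rows[OF x] iz_lt[OF r] i by auto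
    show ?thesis
    proof (intro ext)
      fix k a
      have "Psi x (pact tgt (pth q) (path_vec y)) k a = Phi x (cat y q) k a"
        using True by (simp add: pact_pth_pv Psi_pv yy qq)
      also have "\<dots> = (if k = pnd (j, bs) \<and> k < n \<and> a < d k then ev x (i, as @ bs) a (iz r) else 0)"
        using pc by (auto simp: Phi_def cat_def yy qq)
      also have "\<dots> = (if k = pnd (j, bs) \<and> k < n \<and> a < d k then
          (\<Sum>c<d j. ev x (j, bs) a c * ev x (i, as) c (iz r)) else 0)"
        using ev_cat[OF rows, of bs a j] True by auto
      also have "\<dots> = ma x (pth q) (Phi x y) k a"
        unfolding mact_pth qq fst_conv using True jn
        by (auto simp: Phi_def yy intro!: sum.cong)
      finally show "Psi x (pact tgt (pth q) (path_vec y)) k a = ma x (pth q) (Phi x y) k a" .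
    qed
  next
    case False
    have "Psi x (pact tgt (pth q) (path_vec y)) = (\<lambda>_ _. 0)"
      using False by (simp add: pact_pth_pv yy qq Psi_zero)
    moreover have "ma x (pth q) (Phi x y) = (\<lambda>_ _. 0)"
      using False by (auto simp: mact_pth Phi_def yy qq intro!: ext)
    ultimately show ?thesis by simp
  qed
qed

lemma hom:
  assumes x: "x \<in> RA" and f: "f \<in> KQ n Q1 src tgt" and u: "u \<in> V"
  shows "Psi x (pact tgt f u) = ma x f (Psi x u)"
proof -
  have fu: "finite (supp u)" using V_fin[OF u] .
  have ff: "finite (supp f)" using KQ_fin[OF f] .
  have gy: "good y" if "y \<in> supp u" for y using V_good[OF u] that by (simp add: supp_def)
  have vq: "valid q" if "q \<in> supp f" for q using KQ_valid[OF f] that by (simp add: supp_def)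
  have fs1: "finite (supp (pact tgt (pth q) (path_vec y) :: nat \<times> 'a qpath \<Rightarrow> 'k))" if "q \<in> supp f" "y \<in> supp u" for q y
    using V_fin[OF pact_pv_in_V[OF gy[OF that(2)] vq[OF that(1)]]] .
  have fs2: "finite (supp (\<lambda>z. \<Sum>y\<in>supp u. u y * (pact tgt (pth q) (path_vec y) :: nat \<times> 'a qpath \<Rightarrow> 'k) z))" if "q \<in> supp f" for q
    using V_fin[OF subsp_sum[OF subsp_V fu, of "\<lambda>y. pact tgt (pth q) (path_vec y)" u]]
      pact_pv_in_V[OF gy vq[OF that]] by blast
  have "Psi x (pact tgt f u) = Psi x (\<lambda>z. \<Sum>q\<in>supp f. f q * (\<Sum>y\<in>supp u. u y * pact tgt (pth q) (path_vec y) z))"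
    using pact_expand[OF f u] by simp
  also have "\<dots> = (\<lambda>i a. \<Sum>q\<in>supp f. f q * Psi x (\<lambda>z. \<Sum>y\<in>supp u. u y * pact tgt (pth q) (path_vec y) z) i a)"
    by (rule Psi_comb[OF ff]) (use fs2 in blast)
  also have "\<dots> = (\<lambda>i a. \<Sum>q\<in>supp f. f q * (\<Sum>y\<in>supp u. u y * ma x (pth q) (Phi x y) i a))"
  proof -
    have "Psi x (\<lambda>z. \<Sum>y\<in>supp u. u y * pact tgt (pth q) (path_vec y) z) =
        (\<lambda>i a. \<Sum>y\<in>supp u. u y * ma x (pth q) (Phi x y) i a)" if q: "q \<in> supp f" for q
      by (subst Psi_comb[OF fu]) (use fs1[OF q] hom1[OF x gy vq[OF q]] in auto)
    then show ?thesis by (intro ext sum.cong) auto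
  qed
  also have "\<dots> = ma x f (Psi x u)"
  proof -
    have "ma x f (Psi x u) = (\<lambda>j a. \<Sum>q\<in>supp f. f q * ma x (pth q) (Psi x u) j a)"
      by (rule mact_lin_f[OF ff])
    moreover have "ma x (pth q) (Psi x u) = (\<lambda>j a. \<Sum>y\<in>supp u. u y * ma x (pth q) (Phi x y) j a)" for q
      unfolding Psi_def by (rule mact_lin_v)
    ultimately show ?thesis by simp
  qed
  finally show ?thesis .
qed

end


context qs
begin

definition arr :: "'a \<Rightarrow> 'a qpath" where "arr \<alpha> = (src \<alpha>, [\<alpha>])"

definition Pb :: "('a \<Rightarrow> nat \<Rightarrow> nat \<Rightarrow> 'k) \<Rightarrow> bool" where
  "Pb x \<longleftrightarrow> (\<forall>b\<in>\<sigma>. Phi x b = uv b)"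

definition Pc :: "('a \<Rightarrow> nat \<Rightarrow> nat \<Rightarrow> 'k) \<Rightarrow> bool" where
  "Pc x \<longleftrightarrow> (\<forall>b\<in>\<sigma>. \<forall>\<alpha>\<in>Q1. src \<alpha> = pnd (snd b) \<longrightarrow> cat b (arr \<alpha>) \<notin> \<sigma> \<longrightarrow>
      (\<forall>b'\<in>\<sigma>. pnd (snd b') = tgt \<alpha> \<longrightarrow> plen (snd b') \<le> plen (snd b) \<longrightarrow>
          Phi x (cat b (arr \<alpha>)) (tgt \<alpha>) (ix b') = 0))"

definition Z0 :: "('a \<Rightarrow> nat \<Rightarrow> nat \<Rightarrow> 'k) set" where
  "Z0 = {x \<in> Rep n Q1 src tgt I d. Pb x \<and> Pc x}"

lemma Z0_RA: "x \<in> Z0 \<Longrightarrow> x \<in> RA" by (simp add: Z0_def Rep_def)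

lemma valid_arr: "\<alpha> \<in> Q1 \<Longrightarrow> valid (arr \<alpha>)"
  using valid_snoc[of n Q1 src tgt "src \<alpha>" "[]" \<alpha>] Qv by (simp add: arr_def)

lemma pnd_arr[simp]: "pnd (arr \<alpha>) = tgt \<alpha>" "fst (arr \<alpha>) = src \<alpha>" "snd (arr \<alpha>) = [\<alpha>]"
  using pend_simps(2)[of tgt "src \<alpha>" "[]" \<alpha>] by (simp_all add: arr_def)

definition Mspan :: "nat \<Rightarrow> (nat \<Rightarrow> nat \<Rightarrow> 'k) set" where
  "Mspan l = {v \<in> Mvec n d. \<forall>b\<in>\<sigma>. plen (snd b) < l \<longrightarrow> v (pnd (snd b)) (ix b) = 0}"

lemma uv_pos: "b \<in> \<sigma> \<Longrightarrow> b' \<in> \<sigma> \<Longrightarrow> uv b (pnd (snd b')) (ix b') = (if b = b' then 1 else 0)"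
  using ix_inj by (auto simp: unitv_def)

lemma uv_Mvec: "b \<in> \<sigma> \<Longrightarrow> uv b \<in> Mvec n d"
  using ix_lt sig_pnd by (auto simp: Mvec_def unitv_def)

lemma expand_Mvec:
  assumes v: "v \<in> Mvec n d"
  shows "v = (\<lambda>i a. \<Sum>b\<in>\<sigma>. v (pnd (snd b)) (ix b) * uv b i a)"
proof (intro ext)
  fix i a
  show "v i a = (\<Sum>b\<in>\<sigma>. v (pnd (snd b)) (ix b) * uv b i a)"
  proof (cases "i < n \<and> a < d i")
    case True
    have "(\<Sum>b\<in>\<sigma>. v (pnd (snd b)) (ix b) * uv b i a) = (\<Sum>b\<in>\<sigma>. if b = bas i a then v i a else 0)"
    proof (rule sum.cong[OF refl])
      fix b assume b: "b \<in> \<sigma>"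
      have "(i = pnd (snd b) \<and> a = ix b) \<longleftrightarrow> b = bas i a"
        using bas_ix[OF b] bas_in[of i a] ix_bas[of i a] True by auto
      then show "v (pnd (snd b)) (ix b) * uv b i a = (if b = bas i a then v i a else 0)"
        by (auto simp: unitv_def)
    qed
    also have "\<dots> = v i a" using bas_in True fin_sig by simp
    finally show ?thesis by simp
  next
    case False
    then have "v i a = 0" using v by (auto simp: Mvec_def)
    moreover have "uv b i a = 0" if "b \<in> \<sigma>" for b
      using False ix_lt[OF that] sig_pnd[OF that] by (auto simp: unitv_def)
    ultimately show ?thesis by simp
  qed
qed

lemma Mvec_sum: "finite F \<Longrightarrow> \<forall>w\<in>F. v w \<in> Mvec n d \<Longrightarrow> (\<lambda>i a. \<Sum>w\<in>F. c w * v w i a) \<in> Mvec n d"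
proof -
  assume F: "finite F" and h: "\<forall>w\<in>F. v w \<in> Mvec n d"
  have "(\<Sum>w\<in>F. c w * v w i a) = 0" if "\<not> (i < n \<and> a < d i)" for i a
    using h that by (intro sum.neutral) (auto simp: Mvec_def)
  then show ?thesis unfolding Mvec_def by blast
qed

lemma Mspan_sum:
  assumes "finite F" "\<forall>w\<in>F. v w \<in> Mspan l"
  shows "(\<lambda>i a. \<Sum>w\<in>F. c w * v w i a) \<in> Mspan l"
  using assms Mvec_sum[OF assms(1), of v c] by (auto simp: Mspan_def)

lemma Mspan_mono: "l \<le> l' \<Longrightarrow> Mspan l' \<subseteq> Mspan l"
  by (auto simp: Mspan_def)

lemma Mspan_zero: "(\<lambda>_ _. 0) \<in> Mspan l"
  by (simp add: Mspan_def Mvec_def)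

lemma uv_Mspan: "b \<in> \<sigma> \<Longrightarrow> uv b \<in> Mspan (plen (snd b))"
  using uv_Mvec uv_pos by (auto simp: Mspan_def)

lemma Phi_Mvec: "Phi x y \<in> Mvec n d"
  using Psi_Mvec[of x "path_vec y"] by (simp add: Psi_pv)

lemma Phi_arr:
  assumes x: "x \<in> RA" and y: "good y" and \<alpha>: "\<alpha> \<in> Q1"
  shows "ma x (pth (arr \<alpha>)) (Phi x y) = (if src \<alpha> = pnd (snd y) then Phi x (cat y (arr \<alpha>)) else (\<lambda>_ _. 0))"
  using hom1[OF x y valid_arr[OF \<alpha>]] by (auto simp: pact_pth_pv Psi_pv Psi_zero)

lemma step_Mspan:
  assumes x: "x \<in> Z0" and v: "v \<in> Mspan l" and \<alpha>: "\<alpha> \<in> Q1"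
  shows "ma x (pth (arr \<alpha>)) v \<in> Mspan (Suc l)"
proof -
  have xr: "x \<in> RA" using Z0_RA[OF x] .
  have pb: "Phi x b = uv b" if "b \<in> \<sigma>" for b using x that by (simp add: Z0_def Pb_def)
  let ?F = "{b\<in>\<sigma>. l \<le> plen (snd b)}"
  have fF: "finite ?F" using fin_sig by simp
  have "v = (\<lambda>i a. \<Sum>b\<in>\<sigma>. v (pnd (snd b)) (ix b) * uv b i a)"
    using expand_Mvec v by (simp add: Mspan_def)
  also have "\<dots> = (\<lambda>i a. \<Sum>b\<in>?F. v (pnd (snd b)) (ix b) * uv b i a)"
    using v by (intro ext sum.mono_neutral_right) (auto simp: Mspan_def fin_sig)
  finally have ve: "v = (\<lambda>i a. \<Sum>b\<in>?F. v (pnd (snd b)) (ix b) * uv b i a)" .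
  have each: "ma x (pth (arr \<alpha>)) (uv b) \<in> Mspan (Suc l)" if b: "b \<in> ?F" for b
  proof -
    have bs: "b \<in> \<sigma>" and bl: "l \<le> plen (snd b)" using b by auto
    have gb: "good b" using sig_good[OF bs] by simp
    have e1: "ma x (pth (arr \<alpha>)) (uv b) = (if src \<alpha> = pnd (snd b) then Phi x (cat b (arr \<alpha>)) else (\<lambda>_ _. 0))"
      using Phi_arr[OF xr gb \<alpha>] pb[OF bs] by simp
    show ?thesis
    proof (cases "src \<alpha> = pnd (snd b)")
      case False then show ?thesis using e1 Mspan_zero by simp
    next
      case True
      show ?thesis
      proof (cases "cat b (arr \<alpha>) \<in> \<sigma>")
        case True2: True
        have "uv (cat b (arr \<alpha>)) \<in> Mspan (Suc (plen (snd b)))"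
          using uv_Mspan[OF True2] by simp
        then show ?thesis using e1 True pb[OF True2] Mspan_mono[of "Suc l" "Suc (plen (snd b))"] bl by auto
      next
        case False
        have pc: "pnd (snd (cat b (arr \<alpha>))) = tgt \<alpha>" using pnd_cat[of "arr \<alpha>" b] True by simp
        have "Phi x (cat b (arr \<alpha>)) \<in> Mspan (Suc (plen (snd b)))"
          unfolding Mspan_def
        proof (intro CollectI conjI ballI impI)
          show "Phi x (cat b (arr \<alpha>)) \<in> Mvec n d" by (rule Phi_Mvec)
          fix b' assume b': "b' \<in> \<sigma>" "plen (snd b') < Suc (plen (snd b))"
          show "Phi x (cat b (arr \<alpha>)) (pnd (snd b')) (ix b') = 0"
          proof (cases "pnd (snd b') = tgt \<alpha>")
            case True3: True
            then show ?thesis using x bs \<alpha> True False b' unfolding Z0_def Pc_def by auto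
          next
            case False3: False
            then show ?thesis using pc by (simp add: Phi_def)
          qed
        qed
        then show ?thesis using e1 True Mspan_mono[of "Suc l" "Suc (plen (snd b))"] bl by auto
      qed
    qed
  qed
  have "ma x (pth (arr \<alpha>)) v = (\<lambda>j a. \<Sum>b\<in>?F. v (pnd (snd b)) (ix b) * ma x (pth (arr \<alpha>)) (uv b) j a)"
    by (subst ve) (rule mact_lin_v)
  also have "\<dots> \<in> Mspan (Suc l)" by (rule Mspan_sum[OF fF]) (use each in blast)
  finally show ?thesis .
qed

lemma Phi_Mspan:
  assumes x: "x \<in> Z0"
  shows "good (r, (i, as)) \<Longrightarrow> Phi x (r, (i, as)) \<in> Mspan (length as)"
proof (induction as rule: rev_induct)
  case Nil
  then have "r < t" "i = e r" by (auto simp: good_def)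
  then have "(r, (i, [])) \<in> \<sigma>" using z_in by simp
  then show ?case using x uv_Mspan[of "(r, (i, []))"] by (auto simp: Z0_def Pb_def)
next
  case (snoc \<alpha> as)
  have g: "good (r, (i, as))" and \<alpha>: "\<alpha> \<in> Q1" and s: "src \<alpha> = pnd (i, as)"
    using snoc.prems by (auto simp: good_def valid_snoc)
  have "Phi x (r, (i, as @ [\<alpha>])) = ma x (pth (arr \<alpha>)) (Phi x (r, (i, as)))"
    using Phi_arr[OF Z0_RA[OF x] g \<alpha>] s by (simp add: cat_def)
  also have "\<dots> \<in> Mspan (Suc (length as))"
    using step_Mspan[OF x snoc.IH[OF g] \<alpha>] by simp
  finally show ?case by simp
qed

lemma Phi_Mspan': "x \<in> Z0 \<Longrightarrow> good y \<Longrightarrow> Phi x y \<in> Mspan (plen (snd y))"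
  using Phi_Mspan[of x "fst y" "fst (snd y)" "snd (snd y)"] by (cases y) auto

abbreviation "RP \<equiv> RPhat n Q1 src tgt t e :: nat \<Rightarrow> (nat \<times> 'a qpath \<Rightarrow> 'k) set"

lemma Psi_RP:
  assumes x: "x \<in> Z0" and u: "u \<in> RP l"
  shows "Psi x u \<in> Mspan l"
proof -
  have uV: "u \<in> V" and ul: "\<forall>r p. plen p < l \<longrightarrow> u (r, p) = 0" using u by (auto simp: RPhat_def)
  have "(\<lambda>i a. \<Sum>y\<in>supp u. u y * Phi x y i a) \<in> Mspan l"
  proof (rule Mspan_sum[OF V_fin[OF uV]], rule ballI)
    fix y assume y: "y \<in> supp u"
    then have gy: "good y" using V_good[OF uV] by (simp add: supp_def)
    have "l \<le> plen (snd y)" using y ul by (cases y) (auto simp: supp_def not_less[symmetric])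
    then show "Phi x y \<in> Mspan l" using Phi_Mspan'[OF x gy] Mspan_mono by blast
  qed
  then show ?thesis by (simp add: Psi_def)
qed

lemma Psi_vertex:
  assumes "\<forall>y. u y \<noteq> 0 \<longrightarrow> pnd (snd y) = i" "k \<noteq> i"
  shows "Psi x u k a = 0"
  unfolding Psi_def using assms by (intro sum.neutral) (auto simp: Phi_def supp_def)

end


lemma pv_inj: "inj (path_vec :: nat \<times> 'a qpath \<Rightarrow> nat \<times> 'a qpath \<Rightarrow> 'k::field)"
proof (rule injI)
  fix b b' :: "nat \<times> 'a qpath"
  assume "(path_vec b :: nat \<times> 'a qpath \<Rightarrow> 'k) = path_vec b'"
  then have "(path_vec b :: nat \<times> 'a qpath \<Rightarrow> 'k) b = path_vec b' b" by simp
  then show "b = b'" by (auto simp: path_vec_def split: if_splits)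
qed

lemma lincomb_pv:
  "lincomb c ((path_vec :: nat \<times> 'a qpath \<Rightarrow> nat \<times> 'a qpath \<Rightarrow> 'k::field) ` A)
     = (\<lambda>z. \<Sum>b\<in>A. c (path_vec b) * path_vec b z)"
proof -
  have "inj_on (path_vec :: nat \<times> 'a qpath \<Rightarrow> nat \<times> 'a qpath \<Rightarrow> 'k) A" using pv_inj inj_on_subset by blast
  then show ?thesis unfolding lincomb_def by (intro ext) (simp add: sum.reindex)
qed

lemma lincomb_pv_inv:
  "lincomb (\<lambda>w. h (inv_into A path_vec w)) ((path_vec :: nat \<times> 'a qpath \<Rightarrow> nat \<times> 'a qpath \<Rightarrow> 'k::field) ` A)
     = (\<lambda>z. \<Sum>b\<in>A. h b * path_vec b z)"
proof -
  have i: "inj_on (path_vec :: nat \<times> 'a qpath \<Rightarrow> nat \<times> 'a qpath \<Rightarrow> 'k) A" using pv_inj inj_on_subset by blast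
  show ?thesis unfolding lincomb_pv using inv_into_f_f[OF i] by simp
qed

lemma supp_pv: "supp (path_vec b :: nat \<times> 'a qpath \<Rightarrow> 'k::field) = {b}"
  by (auto simp: supp_def path_vec_def)

context qs
begin

lemma Psi_combpv:
  assumes "finite A"
  shows "Psi x (\<lambda>z. \<Sum>b\<in>A. h b * path_vec b z) = (\<lambda>i a. \<Sum>b\<in>A. h b * Phi x b i a)"
  using Psi_comb[OF assms, where g = path_vec and c = h and x = x] by (simp add: supp_pv Psi_pv)

definition Cx :: "('a \<Rightarrow> nat \<Rightarrow> nat \<Rightarrow> 'k) \<Rightarrow> (nat \<times> 'a qpath \<Rightarrow> 'k) set" where
  "Cx x = {u \<in> V. Psi x u = (\<lambda>_ _. 0)}"

lemma Cx_subspace: "is_subspace V (Cx x)"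
proof -
  have "(\<lambda>_. 0) \<in> Cx x" using subsp_zero[OF subsp_V] by (simp add: Cx_def Psi_zero)
  moreover have "(\<lambda>y. u y + w y) \<in> Cx x" if "u \<in> Cx x" "w \<in> Cx x" for u w
    using that subsp_add[OF subsp_V] Psi_add[OF V_fin V_fin] by (auto simp: Cx_def)
  moreover have "(\<lambda>y. c * u y) \<in> Cx x" if "u \<in> Cx x" for u c
    using that subsp_smult[OF subsp_V] Psi_smult[OF V_fin] by (auto simp: Cx_def)
  ultimately show ?thesis unfolding is_subspace_def Cx_def by blast
qed

lemma Cx_subsp: "subsp (Cx x)"
  using is_subspace_subsp[OF Cx_subspace] .

lemma mact_zero: "ma x f (\<lambda>_ _. 0) = (\<lambda>_ _. 0)"
  by (intro ext) (simp add: mact_def)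

lemma Cx_submod: "x \<in> RA \<Longrightarrow> is_submodule n Q1 src tgt t e (Cx x)"
  unfolding is_submodule_def
  using Cx_subspace pact_in_V hom mact_zero by (auto simp: Cx_def)

lemma IPhat_Cx:
  assumes x: "x \<in> Z0"
  shows "IPhat n Q1 src tgt t e I \<subseteq> Cx x"
proof
  fix u assume u: "u \<in> IPhat n Q1 src tgt t e I"
  have uV: "u \<in> V" and rows: "\<forall>r. (\<lambda>q. u (r, q)) \<in> I" using u by (auto simp: IPhat_def)
  have rel: "\<forall>\<rho>\<in>I. \<forall>i<n. \<forall>j<n. \<forall>a<d j. \<forall>b<d i.
        (\<Sum>p\<in>{p. \<rho> p \<noteq> 0 \<and> fst p = i \<and> pend tgt p = j}. \<rho> p * ev x p a b) = 0"
    using x by (simp add: Z0_def Rep_def)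
  have "Psi x u i a = 0" for i a
  proof (cases "i < n \<and> a < d i")
    case False
    then show ?thesis unfolding Psi_def by (intro sum.neutral) (auto simp: Phi_def)
  next
    case True
    define B where "B r = {q. u (r, q) \<noteq> 0}" for r
    have S: "supp u = Sigma {..<t} B"
      using V_good[OF uV] by (auto simp: supp_def B_def good_def)
    have fB: "finite (B r)" for r
    proof -
      have "B r \<subseteq> snd ` supp u" by (force simp: B_def supp_def)
      then show ?thesis using V_fin[OF uV] finite_subset by blast
    qed
    have "Psi x u i a = (\<Sum>y\<in>Sigma {..<t} B. u y * Phi x y i a)" by (simp add: Psi_def S)
    also have "\<dots> = (\<Sum>r<t. \<Sum>q\<in>B r. u (r, q) * Phi x (r, q) i a)"
      using sum.Sigma[of "{..<t}" B "\<lambda>r q. u (r, q) * Phi x (r, q) i a"] fB by simp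
    also have "\<dots> = 0"
    proof (rule sum.neutral, rule ballI)
      fix r assume r: "r \<in> {..<t}"
      have er: "e r < n" using topv r by simp
      have "(\<Sum>q\<in>B r. u (r, q) * Phi x (r, q) i a) = (\<Sum>q\<in>B r. if pnd q = i then u (r, q) * ev x q a (iz r) else 0)"
        using True by (intro sum.cong) (auto simp: Phi_def)
      also have "\<dots> = (\<Sum>q\<in>{q\<in>B r. pnd q = i}. u (r, q) * ev x q a (iz r))"
        by (rule sum.inter_filter[OF fB, symmetric])
      also have "{q\<in>B r. pnd q = i} = {p. u (r, p) \<noteq> 0 \<and> fst p = e r \<and> pend tgt p = i}"
        using V_good[OF uV] by (auto simp: B_def good_def)
      also have "(\<Sum>p\<in>{p. u (r, p) \<noteq> 0 \<and> fst p = e r \<and> pend tgt p = i}. u (r, p) * ev x p a (iz r)) = 0"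
        using rel rows er True iz_lt[of r] r by auto
      finally show "(\<Sum>q\<in>B r. u (r, q) * Phi x (r, q) i a) = 0" .
    qed
    finally show ?thesis .
  qed
  then show "u \<in> Cx x" using uV by (auto simp: Cx_def)
qed

lemma Pb_D: "x \<in> Z0 \<Longrightarrow> b \<in> \<sigma> \<Longrightarrow> Phi x b = uv b"
  by (simp add: Z0_def Pb_def)

lemma Psi_sig_comb:
  assumes x: "x \<in> Z0" and A: "A \<subseteq> \<sigma>"
  shows "Psi x (\<lambda>z. \<Sum>b\<in>A. h b * path_vec b z) = (\<lambda>i a. \<Sum>b\<in>A. h b * uv b i a)"
proof -
  have fA: "finite A" using A fin_sig finite_subset by blast
  show ?thesis using Psi_combpv[OF fA, of x h] Pb_D[OF x] A by (auto intro!: ext sum.cong)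
qed

lemma uv_coord:
  assumes A: "A \<subseteq> \<sigma>" and b0: "b0 \<in> \<sigma>"
  shows "(\<Sum>b\<in>A. h b * uv b (pnd (snd b0)) (ix b0)) = (if b0 \<in> A then h b0 else 0)"
proof -
  have fA: "finite A" using A fin_sig finite_subset by blast
  have "(\<Sum>b\<in>A. h b * uv b (pnd (snd b0)) (ix b0)) = (\<Sum>b\<in>A. if b = b0 then h b0 else 0)"
    using A b0 by (intro sum.cong) (auto simp: uv_pos)
  then show ?thesis using fA by simp
qed

lemma sig_V: "A \<subseteq> \<sigma> \<Longrightarrow> (\<lambda>z. \<Sum>b\<in>A. h b * path_vec b z) \<in> V"
  by (rule comb_in_V) (use fin_sig sig_good in \<open>auto intro: finite_subset\<close>)

lemma Cx_indep:
  assumes x: "x \<in> Z0"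
  shows "indep_mod (Cx x) (path_vec ` \<sigma>)"
  unfolding indep_mod_def
proof (intro conjI allI impI ballI)
  show "finite (path_vec ` \<sigma>)" using fin_sig by simp
  fix c and w :: "nat \<times> 'a qpath \<Rightarrow> 'k" assume c: "lincomb c (path_vec ` \<sigma>) \<in> Cx x" and w: "w \<in> path_vec ` \<sigma>"
  then obtain b0 where b0: "b0 \<in> \<sigma>" "w = path_vec b0" by auto
  have "Psi x (\<lambda>z. \<Sum>b\<in>\<sigma>. c (path_vec b) * path_vec b z) = (\<lambda>_ _. 0)"
    using c by (simp add: Cx_def lincomb_pv)
  then have "(\<lambda>i a. \<Sum>b\<in>\<sigma>. c (path_vec b) * uv b i a) = (\<lambda>_ _. 0)"
    using Psi_sig_comb[OF x subset_refl] by simp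
  then have "(\<Sum>b\<in>\<sigma>. c (path_vec b) * uv b (pnd (snd b0)) (ix b0)) = 0" by metis
  then show "c w = 0" using uv_coord[OF subset_refl b0(1)] b0 by simp
qed

lemma expand_Psi:
  assumes x: "x \<in> Z0" and u: "u \<in> V"
  shows "(\<lambda>y. u y - (\<Sum>b\<in>\<sigma>. Psi x u (pnd (snd b)) (ix b) * path_vec b y)) \<in> Cx x"
proof -
  let ?w = "\<lambda>y. \<Sum>b\<in>\<sigma>. Psi x u (pnd (snd b)) (ix b) * path_vec b y"
  have wV: "?w \<in> V" by (rule sig_V) simp
  have "Psi x (\<lambda>y. u y - ?w y) = (\<lambda>i a. Psi x u i a - Psi x ?w i a)"
    by (rule Psi_diff[OF V_fin[OF u] V_fin[OF wV]])
  also have "\<dots> = (\<lambda>_ _. 0)"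
    using Psi_sig_comb[OF x subset_refl] expand_Mvec[OF Psi_Mvec, of x u] by (auto intro!: ext)
  finally show ?thesis using subsp_diff[OF subsp_V u wV] by (simp add: Cx_def)
qed

lemma Cx_spans:
  assumes x: "x \<in> Z0"
  shows "spans_mod (Cx x) V (path_vec ` \<sigma>)"
  unfolding spans_mod_def
proof
  fix u assume u: "u \<in> V"
  let ?h = "\<lambda>b. Psi x u (pnd (snd b)) (ix b)"
  have "lincomb (\<lambda>w. ?h (inv_into \<sigma> path_vec w)) ((path_vec :: _ \<Rightarrow> _ \<Rightarrow> 'k) ` \<sigma>) = (\<lambda>z. \<Sum>b\<in>\<sigma>. ?h b * path_vec b z)"
    by (rule lincomb_pv_inv)
  then show "\<exists>c. (\<lambda>y. u y - lincomb c (path_vec ` \<sigma>) y) \<in> Cx x"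
    using expand_Psi[OF x u] by metis
qed

end


context qs
begin

abbreviation "NN C l \<equiv> set_plus (RP l) C"
abbreviation "pv \<equiv> (path_vec :: nat \<times> 'a qpath \<Rightarrow> nat \<times> 'a qpath \<Rightarrow> 'k)"

lemma set_plusE: "v \<in> set_plus U W \<Longrightarrow> (\<And>u w. u \<in> U \<Longrightarrow> w \<in> W \<Longrightarrow> v = (\<lambda>y. u y + w y) \<Longrightarrow> P) \<Longrightarrow> P"
  unfolding set_plus_def by blast

lemma set_plusI: "u \<in> U \<Longrightarrow> w \<in> W \<Longrightarrow> v = (\<lambda>y. u y + w y) \<Longrightarrow> v \<in> set_plus U W"
  unfolding set_plus_def by blast

lemma RP_V: "u \<in> RP l \<Longrightarrow> u \<in> V" by (simp add: RPhat_def)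

lemma sigcomb_RP:
  assumes A: "A \<subseteq> \<sigma>" "\<forall>b\<in>A. l \<le> plen (snd b)"
  shows "(\<lambda>z. \<Sum>b\<in>A. h b * pv b z) \<in> RP l"
  unfolding RPhat_def
proof (intro CollectI conjI allI impI)
  show "(\<lambda>z. \<Sum>b\<in>A. h b * pv b z) \<in> V" by (rule sig_V[OF A(1)])
  fix r :: nat and p :: "'a qpath" assume "plen p < l"
  then show "(\<Sum>b\<in>A. h b * pv b (r, p)) = 0"
    using A(2) by (intro sum.neutral) (auto simp: path_vec_def)
qed

lemma sum_uv_split:
  assumes x: "x \<in> Z0" and P: "P \<in> Mspan l" and Pv: "\<And>k a. k \<noteq> i \<Longrightarrow> P k a = 0"
  shows "P = (\<lambda>k a. (\<Sum>b\<in>{b\<in>\<sigma>. plen (snd b) = l \<and> pnd (snd b) = i}. P (pnd (snd b)) (ix b) * uv b k a)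
                + (\<Sum>b\<in>{b\<in>\<sigma>. Suc l \<le> plen (snd b) \<and> pnd (snd b) = i}. P (pnd (snd b)) (ix b) * uv b k a))"
proof -
  let ?A = "{b\<in>\<sigma>. plen (snd b) = l \<and> pnd (snd b) = i}" and ?B = "{b\<in>\<sigma>. Suc l \<le> plen (snd b) \<and> pnd (snd b) = i}"
  have fA: "finite ?A" "finite ?B" using fin_sig by auto
  have "P = (\<lambda>k a. \<Sum>b\<in>\<sigma>. P (pnd (snd b)) (ix b) * uv b k a)"
    using expand_Mvec P by (simp add: Mspan_def)
  also have "\<dots> = (\<lambda>k a. \<Sum>b\<in>?A \<union> ?B. P (pnd (snd b)) (ix b) * uv b k a)"
  proof (intro ext)
    fix k a
    show "(\<Sum>b\<in>\<sigma>. P (pnd (snd b)) (ix b) * uv b k a) = (\<Sum>b\<in>?A \<union> ?B. P (pnd (snd b)) (ix b) * uv b k a)"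
      by (rule sum.mono_neutral_right[OF fin_sig]) (use P Pv in \<open>auto simp: Mspan_def\<close>)
  qed
  also have "\<dots> = (\<lambda>k a. (\<Sum>b\<in>?A. P (pnd (snd b)) (ix b) * uv b k a) + (\<Sum>b\<in>?B. P (pnd (snd b)) (ix b) * uv b k a))"
    by (intro ext sum.union_disjoint fA) auto
  finally show ?thesis .
qed

lemma Cx_layer_one:
  assumes x: "x \<in> Z0" and l: "l \<le> L" and i: "i < n"
  shows "quot_dim (at_vertex tgt i (NN (Cx x) l)) (at_vertex tgt i (NN (Cx x) (Suc l))) (m l i)"
proof -
  let ?A = "{b\<in>\<sigma>. plen (snd b) = l \<and> pnd (snd b) = i}"
  let ?H = "{b\<in>\<sigma>. Suc l \<le> plen (snd b) \<and> pnd (snd b) = i}"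
  let ?B = "pv ` ?A"
  have fA: "finite ?A" using fin_sig by simp
  have z0: "(\<lambda>_. 0) \<in> Cx x" using subsp_zero[OF Cx_subsp] .
  have Bsub: "?B \<subseteq> at_vertex tgt i (NN (Cx x) l)"
  proof
    fix v assume "v \<in> ?B"
    then obtain b where b: "b \<in> ?A" "v = pv b" by auto
    have "pv b \<in> RP l"
      using sigcomb_RP[of "{b}" l "\<lambda>_. 1"] b by (simp)
    then have "v \<in> NN (Cx x) l" using set_plusI[OF _ z0, of v] b by simp
    moreover have "\<forall>r p. v (r, p) \<noteq> 0 \<longrightarrow> pend tgt p = i" using b by (auto simp: path_vec_def)
    ultimately show "v \<in> at_vertex tgt i (NN (Cx x) l)" by (simp add: at_vertex_def)
  qed
  have cardB: "card ?B = m l i"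
    using card_image[OF inj_on_subset[OF pv_inj, of ?A]] sig_card[OF l i] by simp
  have indB: "indep_mod (at_vertex tgt i (NN (Cx x) (Suc l))) ?B"
    unfolding indep_mod_def
  proof (intro conjI allI impI ballI)
    show "finite ?B" using fA by simp
    fix c and v :: "nat \<times> 'a qpath \<Rightarrow> 'k"
    assume c: "lincomb c ?B \<in> at_vertex tgt i (NN (Cx x) (Suc l))" and v: "v \<in> ?B"
    then obtain b0 where b0: "b0 \<in> ?A" "v = pv b0" by auto
    from c have "lincomb c ?B \<in> NN (Cx x) (Suc l)" by (simp add: at_vertex_def)
    then obtain u w where u: "u \<in> RP (Suc l)" and w: "w \<in> Cx x" and e: "lincomb c ?B = (\<lambda>y. u y + w y)"
      by (rule set_plusE)
    have "Psi x (lincomb c ?B) = Psi x u"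
      using e Psi_add[OF V_fin[OF RP_V[OF u]] V_fin, of w x] w by (simp add: Cx_def)
    moreover have "Psi x (lincomb c ?B) = (\<lambda>k a. \<Sum>b\<in>?A. c (pv b) * uv b k a)"
      unfolding lincomb_pv by (rule Psi_sig_comb[OF x]) auto
    ultimately have "(\<lambda>k a. \<Sum>b\<in>?A. c (pv b) * uv b k a) \<in> Mspan (Suc l)"
      using Psi_RP[OF x u] by simp
    then have "(\<Sum>b\<in>?A. c (pv b) * uv b (pnd (snd b0)) (ix b0)) = 0"
      using b0 by (auto simp: Mspan_def)
    then show "c v = 0" using uv_coord[of ?A b0] b0 by auto
  qed
  have spB: "spans_mod (at_vertex tgt i (NN (Cx x) (Suc l))) (at_vertex tgt i (NN (Cx x) l)) ?B"
    unfolding spans_mod_def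
  proof
    fix u0 assume u0: "u0 \<in> at_vertex tgt i (NN (Cx x) l)"
    then have u0N: "u0 \<in> NN (Cx x) l" and u0i: "\<forall>r p. u0 (r, p) \<noteq> 0 \<longrightarrow> pend tgt p = i"
      by (auto simp: at_vertex_def)
    obtain u w where u: "u \<in> RP l" and w: "w \<in> Cx x" and e: "u0 = (\<lambda>y. u y + w y)"
      using u0N by (rule set_plusE)
    have wV: "w \<in> V" using w by (simp add: Cx_def)
    have u0V: "u0 \<in> V" using e subsp_add[OF subsp_V RP_V[OF u] wV] by simp
    define P where "P = Psi x u0"
    have PP: "P = Psi x u" using e Psi_add[OF V_fin[OF RP_V[OF u]] V_fin[OF wV], of x] w
      by (simp add: Cx_def P_def)
    have PM: "P \<in> Mspan l" using PP Psi_RP[OF x u] by simp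
    have Pv: "P k a = 0" if "k \<noteq> i" for k a
      unfolding P_def by (rule Psi_vertex) (use u0i that in auto)
    define h where "h b = P (pnd (snd b)) (ix b)" for b
    define S0 where "S0 = (\<lambda>z. \<Sum>b\<in>?A. h b * pv b z)"
    define R where "R = (\<lambda>z. \<Sum>b\<in>?H. h b * pv b z)"
    define k' where "k' = (\<lambda>y. u0 y - S0 y - R y)"
    have S0V: "S0 \<in> V" unfolding S0_def by (rule sig_V) auto
    have RR: "R \<in> RP (Suc l)" unfolding R_def by (rule sigcomb_RP) auto
    have RV: "R \<in> V" using RP_V[OF RR] .
    have k'V: "k' \<in> V" unfolding k'_def
      using subsp_diff[OF subsp_V subsp_diff[OF subsp_V u0V S0V] RV] by simp
    have "Psi x k' = (\<lambda>k a. P k a - Psi x S0 k a - Psi x R k a)"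
    proof -
      have d1: "Psi x (\<lambda>y. u0 y - S0 y) = (\<lambda>k a. P k a - Psi x S0 k a)"
        unfolding P_def by (rule Psi_diff[OF V_fin[OF u0V] V_fin[OF S0V]])
      have "Psi x k' = (\<lambda>k a. Psi x (\<lambda>y. u0 y - S0 y) k a - Psi x R k a)"
        unfolding k'_def by (rule Psi_diff[OF V_fin[OF subsp_diff[OF subsp_V u0V S0V]] V_fin[OF RV]])
      then show ?thesis using d1 by simp
    qed
    also have "\<dots> = (\<lambda>_ _. 0)"
    proof -
      have "Psi x S0 = (\<lambda>k a. \<Sum>b\<in>?A. h b * uv b k a)" unfolding S0_def by (rule Psi_sig_comb[OF x]) auto
      moreover have "Psi x R = (\<lambda>k a. \<Sum>b\<in>?H. h b * uv b k a)" unfolding R_def by (rule Psi_sig_comb[OF x]) auto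
      moreover have "P = (\<lambda>k a. (\<Sum>b\<in>?A. h b * uv b k a) + (\<Sum>b\<in>?H. h b * uv b k a))"
        unfolding h_def by (rule sum_uv_split[OF x PM Pv])
      ultimately show ?thesis by (auto intro!: ext)
    qed
    finally have k'C: "k' \<in> Cx x" using k'V by (simp add: Cx_def)
    have lc: "lincomb (\<lambda>v. h (inv_into ?A pv v)) ?B = S0"
      unfolding S0_def by (rule lincomb_pv_inv)
    have "(\<lambda>y. u0 y - S0 y) \<in> NN (Cx x) (Suc l)"
      by (rule set_plusI[OF RR k'C]) (auto simp: k'_def)
    moreover have "\<forall>r p. u0 (r, p) - S0 (r, p) \<noteq> 0 \<longrightarrow> pend tgt p = i"
    proof (intro allI impI)
      fix r p assume "u0 (r, p) - S0 (r, p) \<noteq> 0"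
      then have "u0 (r, p) \<noteq> 0 \<or> S0 (r, p) \<noteq> 0" by auto
      then show "pend tgt p = i"
      proof
        assume "u0 (r, p) \<noteq> 0" then show ?thesis using u0i by blast
      next
        assume "S0 (r, p) \<noteq> 0"
        then obtain b where "b \<in> ?A" "h b * pv b (r, p) \<noteq> 0"
          unfolding S0_def by (meson sum.neutral)
        then show ?thesis by (auto simp: path_vec_def split: if_splits)
      qed
    qed
    ultimately have "(\<lambda>y. u0 y - lincomb (\<lambda>v. h (inv_into ?A pv v)) ?B y) \<in> at_vertex tgt i (NN (Cx x) (Suc l))"
      using lc by (simp add: at_vertex_def)
    then show "\<exists>c. (\<lambda>y. u0 y - lincomb c ?B y) \<in> at_vertex tgt i (NN (Cx x) (Suc l))" by blast
  qed
  show ?thesis unfolding quot_dim_def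
    using Bsub fA cardB indB spB by blast
qed

lemma Cx_Grass:
  assumes x: "x \<in> Z0"
  shows "Cx x \<in> Grass n Q1 src tgt I t e L m \<sigma>"
  unfolding Grass_def radical_layering_is_def
  using Cx_submod[OF Z0_RA[OF x]] IPhat_Cx[OF x] Cx_layer_one[OF x] Cx_indep[OF x] Cx_spans[OF x]
  by blast

lemma Cx_iso:
  assumes x: "x \<in> Z0"
  shows "quot_iso_rep n Q1 src tgt t e d (Cx x) x"
  unfolding quot_iso_rep_def
proof (intro exI[of _ "Psi x"] conjI ballI allI)
  show "\<And>u w. u \<in> V \<Longrightarrow> w \<in> V \<Longrightarrow> Psi x (\<lambda>y. u y + w y) = (\<lambda>i a. Psi x u i a + Psi x w i a)"
    using Psi_add V_fin by blast
  show "\<And>u c. u \<in> V \<Longrightarrow> Psi x (\<lambda>y. c * u y) = (\<lambda>i a. c * Psi x u i a)"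
    using Psi_smult V_fin by blast
  show "Psi x ` V = Mvec n d"
  proof
    show "Psi x ` V \<subseteq> Mvec n d" using Psi_Mvec by blast
    show "Mvec n d \<subseteq> Psi x ` V"
    proof
      fix v :: "nat \<Rightarrow> nat \<Rightarrow> 'k" assume v: "v \<in> Mvec n d"
      let ?w = "\<lambda>z. \<Sum>b\<in>\<sigma>. v (pnd (snd b)) (ix b) * pv b z"
      have "Psi x ?w = v" using Psi_sig_comb[OF x subset_refl] expand_Mvec[OF v] by simp
      moreover have "?w \<in> V" by (rule sig_V) simp
      ultimately show "v \<in> Psi x ` V" by force
    qed
  qed
  show "\<And>u. u \<in> V \<Longrightarrow> (Psi x u = (\<lambda>_ _. 0)) = (u \<in> Cx x)"
    by (simp add: Cx_def)
  show "\<And>f u. f \<in> KQ n Q1 src tgt \<Longrightarrow> u \<in> V \<Longrightarrow> Psi x (pact tgt f u) = ma x f (Psi x u)"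
    using hom[OF Z0_RA[OF x]] by blast
qed

end


context qs
begin

abbreviation "GR \<equiv> Grass n Q1 src tgt I t e L m \<sigma>"

definition crd :: "(nat \<times> 'a qpath \<Rightarrow> 'k) set \<Rightarrow> (nat \<times> 'a qpath \<Rightarrow> 'k) \<Rightarrow> nat \<times> 'a qpath \<Rightarrow> 'k" where
  "crd C v b = chart_coord (pv ` \<sigma>) v (pv b) C"

lemma GR_D:
  assumes "C \<in> GR"
  shows "is_submodule n Q1 src tgt t e C" "IPhat n Q1 src tgt t e I \<subseteq> C"
    "radical_layering_is n Q1 src tgt t e L m C" "indep_mod C (pv ` \<sigma>)" "spans_mod C V (pv ` \<sigma>)"
  using assms by (auto simp: Grass_def)

lemma GR_subsp: "C \<in> GR \<Longrightarrow> subsp C"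
proof -
  assume C: "C \<in> GR"
  have "is_subspace V C" using GR_D(1)[OF C] by (simp add: is_submodule_def)
  then show ?thesis by (rule is_subspace_subsp)
qed

lemma pv_inv: "b \<in> A \<Longrightarrow> inv_into A pv (pv b) = b"
  by (rule inv_into_f_f[OF inj_on_subset[OF pv_inj subset_UNIV]])

lemma GR_V: "C \<in> GR \<Longrightarrow> C \<subseteq> V"
  using GR_D(1) by (auto simp: is_submodule_def is_subspace_def)

lemma GR_pact: "C \<in> GR \<Longrightarrow> f \<in> KQ n Q1 src tgt \<Longrightarrow> u \<in> C \<Longrightarrow> pact tgt f u \<in> C"
  using GR_D(1) by (auto simp: is_submodule_def)

lemma crd_spec:
  assumes C: "C \<in> GR" and v: "v \<in> V"
  shows "(\<lambda>y. v y - (\<Sum>b\<in>\<sigma>. crd C v b * pv b y)) \<in> C"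
  using coord_spec[OF GR_subsp[OF C] GR_D(4)[OF C] GR_D(5)[OF C] v]
  unfolding lincomb_pv crd_def .

lemma crd_unique:
  assumes C: "C \<in> GR" and h: "(\<lambda>y. v y - (\<Sum>b\<in>\<sigma>. h b * pv b y)) \<in> C" and b0: "b0 \<in> \<sigma>"
  shows "crd C v b0 = h b0"
proof -
  have "(\<lambda>y. v y - lincomb (\<lambda>w. h (inv_into \<sigma> pv w)) (pv ` \<sigma>) y) \<in> C"
    using h by (simp add: lincomb_pv_inv)
  from coord_unique[OF GR_subsp[OF C] GR_D(4)[OF C] this] b0
  show ?thesis using pv_inv[OF b0] by (simp add: crd_def)
qed

lemma crd_C: "C \<in> GR \<Longrightarrow> u \<in> C \<Longrightarrow> b0 \<in> \<sigma> \<Longrightarrow> crd C u b0 = 0"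
  using crd_unique[of C u "\<lambda>_. 0" b0] by simp

lemma crd_zero_in:
  assumes C: "C \<in> GR" and u: "u \<in> V" and z: "\<forall>b\<in>\<sigma>. crd C u b = 0"
  shows "u \<in> C"
  using crd_spec[OF C u] z by simp

lemma crd_sig: "C \<in> GR \<Longrightarrow> b \<in> \<sigma> \<Longrightarrow> b0 \<in> \<sigma> \<Longrightarrow> crd C (pv b) b0 = (if b0 = b then 1 else 0)"
proof -
  assume C: "C \<in> GR" and b: "b \<in> \<sigma>" and b0: "b0 \<in> \<sigma>"
  have "(\<Sum>b'\<in>\<sigma>. (if b' = b then 1 else 0) * pv b' y) = (\<Sum>b'\<in>\<sigma>. if b' = b then pv b y else 0)" for y
    by (rule sum.cong) auto
  then have "(\<lambda>y. pv b y - (\<Sum>b'\<in>\<sigma>. (if b' = b then 1 else 0) * pv b' y)) = (\<lambda>_. 0)"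
    using b fin_sig by simp
  then have "(\<lambda>y. pv b y - (\<Sum>b'\<in>\<sigma>. (if b' = b then 1 else 0) * pv b' y)) \<in> C"
    using subsp_zero[OF GR_subsp[OF C]] by simp
  from crd_unique[OF C this b0] show ?thesis .
qed

lemma crd_lin:
  assumes C: "C \<in> GR" and F: "finite F" and g: "\<forall>w\<in>F. g w \<in> V" and b0: "b0 \<in> \<sigma>"
  shows "crd C (\<lambda>z. \<Sum>w\<in>F. a w * g w z) b0 = (\<Sum>w\<in>F. a w * crd C (g w) b0)"
proof -
  have "(\<lambda>y. \<Sum>w\<in>F. a w * (g w y - (\<Sum>b\<in>\<sigma>. crd C (g w) b * pv b y))) \<in> C"
    by (rule subsp_sum[OF GR_subsp[OF C] F]) (use crd_spec[OF C] g in blast)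
  moreover have "(\<lambda>y. \<Sum>w\<in>F. a w * (g w y - (\<Sum>b\<in>\<sigma>. crd C (g w) b * pv b y)))
      = (\<lambda>y. (\<Sum>w\<in>F. a w * g w y) - (\<Sum>b\<in>\<sigma>. (\<Sum>w\<in>F. a w * crd C (g w) b) * pv b y))"
  proof
    fix y
    have "(\<Sum>w\<in>F. a w * (\<Sum>b\<in>\<sigma>. crd C (g w) b * pv b y)) = (\<Sum>b\<in>\<sigma>. (\<Sum>w\<in>F. a w * crd C (g w) b) * pv b y)"
      unfolding sum_distrib_left sum_distrib_right mult.assoc by (rule sum.swap)
    then show "(\<Sum>w\<in>F. a w * (g w y - (\<Sum>b\<in>\<sigma>. crd C (g w) b * pv b y)))
      = (\<Sum>w\<in>F. a w * g w y) - (\<Sum>b\<in>\<sigma>. (\<Sum>w\<in>F. a w * crd C (g w) b) * pv b y)"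
      by (simp add: right_diff_distrib sum_subtractf)
  qed
  ultimately show ?thesis using crd_unique[OF C _ b0] by simp
qed

lemma crd_zero_comb:
  assumes C: "C \<in> GR" and h: "(\<lambda>y. \<Sum>b\<in>\<sigma>. g b * pv b y) \<in> C" and b0: "b0 \<in> \<sigma>"
  shows "g b0 = 0"
proof -
  have "(\<lambda>y. (\<lambda>_. 0) y - (\<Sum>b\<in>\<sigma>. (- g b) * pv b y)) \<in> C" using h by (simp add: sum_negf)
  from crd_unique[OF C this b0] crd_C[OF C subsp_zero[OF GR_subsp[OF C]] b0] show ?thesis by simp
qed

lemma pth_KQ: "valid q \<Longrightarrow> pth q \<in> KQ n Q1 src tgt"
  by (auto simp: KQ_def pth_def)

lemma crd_vertex:
  assumes C: "C \<in> GR" and u: "u \<in> V" and i: "i < n" and ui: "\<forall>y. u y \<noteq> 0 \<longrightarrow> pnd (snd y) = i"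
    and b0: "b0 \<in> \<sigma>" "pnd (snd b0) \<noteq> i"
  shows "crd C u b0 = 0"
proof -
  let ?h = "\<lambda>b. if pnd (snd b) = i then crd C u b else 0"
  let ?w = "\<lambda>y. u y - (\<Sum>b\<in>\<sigma>. crd C u b * pv b y)"
  have wC: "?w \<in> C" by (rule crd_spec[OF C u])
  have wV: "?w \<in> V" using wC GR_V[OF C] by blast
  have "pact tgt (pth (i, [])) ?w \<in> C" by (rule GR_pact[OF C pth_KQ wC]) (simp add: i)
  then have "restr tgt i ?w \<in> C" using pact_ev[OF wV] by simp
  moreover have "restr tgt i ?w = (\<lambda>y. u y - (\<Sum>b\<in>\<sigma>. ?h b * pv b y))"
  proof
    fix y
    show "restr tgt i ?w y = u y - (\<Sum>b\<in>\<sigma>. ?h b * pv b y)"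
    proof (cases "pnd (snd y) = i")
      case True
      then show ?thesis by (auto simp: restr_def path_vec_def intro!: sum.cong)
    next
      case False
      then have "u y = 0" using ui by blast
      moreover have "(\<Sum>b\<in>\<sigma>. ?h b * pv b y) = 0" using False by (intro sum.neutral) (auto simp: path_vec_def)
      ultimately show ?thesis using False by (simp add: restr_def)
    qed
  qed
  ultimately show ?thesis using crd_unique[OF C _ b0(1), of u ?h] b0 by simp
qed

lemma subsp_set_plus: "subsp A \<Longrightarrow> subsp B \<Longrightarrow> subsp (set_plus A B)"
proof -
  assume A: "subsp A" and B: "subsp B"
  have z: "(\<lambda>_. 0) \<in> set_plus A B" by (rule set_plusI[OF subsp_zero[OF A] subsp_zero[OF B]]) simp
  have a: "(\<lambda>y. u y + w y) \<in> set_plus A B" if hu: "u \<in> set_plus A B" and hw: "w \<in> set_plus A B" for u w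
  proof -
    obtain u1 u2 where "u1 \<in> A" "u2 \<in> B" "u = (\<lambda>y. u1 y + u2 y)" using hu by (rule set_plusE)
    moreover obtain w1 w2 where "w1 \<in> A" "w2 \<in> B" "w = (\<lambda>y. w1 y + w2 y)" using hw by (rule set_plusE)
    note h = calculation this
    have A1: "(\<lambda>y. u1 y + w1 y) \<in> A" using subsp_add[OF A h(1) h(4)] .
    have B1: "(\<lambda>y. u2 y + w2 y) \<in> B" using subsp_add[OF B h(2) h(5)] .
    show ?thesis by (rule set_plusI[OF A1 B1]) (simp add: h(3,6) add.assoc add.left_commute)
  qed
  have s: "(\<lambda>y. c * u y) \<in> set_plus A B" if hu: "u \<in> set_plus A B" for u c
  proof -
    obtain u1 u2 where "u1 \<in> A" "u2 \<in> B" "u = (\<lambda>y. u1 y + u2 y)" using hu by (rule set_plusE)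
    note h = this
    have A1: "(\<lambda>y. c * u1 y) \<in> A" using subsp_smult[OF A h(1)] .
    have B1: "(\<lambda>y. c * u2 y) \<in> B" using subsp_smult[OF B h(2)] .
    show ?thesis by (rule set_plusI[OF A1 B1]) (simp add: h(3) distrib_left)
  qed
  show ?thesis unfolding subsp_def using z a s by blast
qed

lemma subsp_at_vertex: "subsp U \<Longrightarrow> subsp (at_vertex tgt i U)"
proof -
  assume U: "subsp U"
  have z: "(\<lambda>_. 0) \<in> at_vertex tgt i U" using subsp_zero[OF U] by (simp add: at_vertex_def)
  have a: "(\<lambda>y. u y + w y) \<in> at_vertex tgt i U" if hu: "u \<in> at_vertex tgt i U" and hw: "w \<in> at_vertex tgt i U" for u w
  proof -
    have "u \<in> U" "w \<in> U" using hu hw by (auto simp: at_vertex_def)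
    moreover have "\<forall>r p. u (r, p) + w (r, p) \<noteq> 0 \<longrightarrow> pend tgt p = i"
    proof (intro allI impI)
      fix r p assume "u (r, p) + w (r, p) \<noteq> 0"
      then have "u (r, p) \<noteq> 0 \<or> w (r, p) \<noteq> 0" by auto
      then show "pend tgt p = i" using hu hw unfolding at_vertex_def by blast
    qed
    ultimately show ?thesis using subsp_add[OF U] by (simp add: at_vertex_def)
  qed
  have s: "(\<lambda>y. c * u y) \<in> at_vertex tgt i U" if hu: "u \<in> at_vertex tgt i U" for u c
    using hu subsp_smult[OF U] by (auto simp: at_vertex_def)
  show ?thesis unfolding subsp_def using z a s by blast
qed

lemma subsp_RP: "subsp (RP l)"
proof -
  have "(\<lambda>_. 0) \<in> RP l" using subsp_zero[OF subsp_V] by (simp add: RPhat_def)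
  moreover have "(\<lambda>y. u y + w y) \<in> RP l" if "u \<in> RP l" "w \<in> RP l" for u w
    using that subsp_add[OF subsp_V] by (auto simp: RPhat_def)
  moreover have "(\<lambda>y. c * u y) \<in> RP l" if "u \<in> RP l" for u c
    using that subsp_smult[OF subsp_V] by (auto simp: RPhat_def)
  ultimately show ?thesis unfolding subsp_def by blast
qed

lemma pv_at_vertex:
  assumes C: "subsp C" and b: "b \<in> \<sigma>" "plen (snd b) = l" "pnd (snd b) = i"
  shows "pv b \<in> at_vertex tgt i (NN C l)"
proof -
  have "pv b \<in> RP l" using sigcomb_RP[of "{b}" l "\<lambda>_. 1"] b by simp
  then have "pv b \<in> NN C l" using set_plusI[OF _ subsp_zero[OF C], of "pv b"] by simp
  moreover have "\<forall>r p. pv b (r, p) \<noteq> 0 \<longrightarrow> pend tgt p = i" using b by (auto simp: path_vec_def)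
  ultimately show ?thesis by (simp add: at_vertex_def)
qed

lemma RP_IPhat: "RP (Suc L) \<subseteq> IPhat n Q1 src tgt t e I"
proof
  fix w assume w: "w \<in> RP (Suc L)"
  have wV: "w \<in> V" using RP_V[OF w] .
  have "(\<lambda>q. w (r, q)) \<in> Rpow n Q1 src tgt (Suc L)" for r
  proof -
    have "{q. w (r, q) \<noteq> 0} \<subseteq> snd ` supp w" by (force simp: supp_def)
    then have "finite {q. w (r, q) \<noteq> 0}" using V_fin[OF wV] finite_subset by blast
    moreover have "valid q" if "w (r, q) \<noteq> 0" for q using V_good[OF wV that] by (simp add: good_def)
    ultimately show ?thesis using w by (auto simp: Rpow_def KQ_def RPhat_def)
  qed
  then show "w \<in> IPhat n Q1 src tgt t e I" using loewy1 wV by (auto simp: IPhat_def)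
qed

end


context qs
begin

definition CL :: "(nat \<times> 'a qpath \<Rightarrow> 'k) set \<Rightarrow> nat \<Rightarrow> bool" where
  "CL C l \<longleftrightarrow> (\<forall>u\<in>NN C l. \<exists>h. (\<forall>b\<in>\<sigma>. plen (snd b) < l \<longrightarrow> h b = 0) \<and>
      (\<lambda>y. u y - (\<Sum>b\<in>\<sigma>. h b * pv b y)) \<in> C)"

lemma NN_V: "C \<in> GR \<Longrightarrow> u \<in> NN C l \<Longrightarrow> u \<in> V"
  by (erule set_plusE[of u]) (use GR_V RP_V subsp_add[OF subsp_V] in blast)

lemma at_vertex_sub: "at_vertex tgt i U \<subseteq> U" by (auto simp: at_vertex_def)

lemma lincomb_sig_sub:
  assumes "A \<subseteq> \<sigma>"
  shows "lincomb c (pv ` A) = (\<lambda>y. \<Sum>b\<in>\<sigma>. (if b \<in> A then c (pv b) else 0) * pv b y)"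
  unfolding lincomb_pv
  by (intro ext sum.mono_neutral_cong_left fin_sig assms) auto

lemma claim_vertex:
  assumes C: "C \<in> GR" and l: "l \<le> L" and i: "i < n" and IH: "CL C (Suc l)"
    and r: "r \<in> at_vertex tgt i (NN C l)"
  shows "\<exists>H. (\<forall>b\<in>\<sigma>. plen (snd b) < l \<longrightarrow> H b = 0) \<and> (\<lambda>y. r y - (\<Sum>b\<in>\<sigma>. H b * pv b y)) \<in> C"
proof -
  let ?A = "{b\<in>\<sigma>. plen (snd b) = l \<and> pnd (snd b) = i}"
  let ?S = "pv ` ?A"
  let ?U = "at_vertex tgt i (NN C l)" and ?W = "at_vertex tgt i (NN C (Suc l))"
  have sC: "subsp C" using GR_subsp[OF C] .
  have sW: "subsp ?W" by (intro subsp_at_vertex subsp_set_plus subsp_RP sC)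
  have "quot_dim ?U ?W (m l i)" using GR_D(3)[OF C] l i by (simp add: radical_layering_is_def)
  then obtain B' where B': "B' \<subseteq> ?U" "finite B'" "card B' = m l i" "indep_mod ?W B'" "spans_mod ?W ?U B'"
    by (auto simp: quot_dim_def)
  have SU: "?S \<subseteq> ?U" using pv_at_vertex[OF sC] by auto
  have cardS: "card ?S = card B'"
    using card_image[OF inj_on_subset[OF pv_inj, of ?A]] sig_card[OF l i] B'(3) by simp
  have indS: "indep_mod ?W ?S"
    unfolding indep_mod_def
  proof (intro conjI allI impI ballI)
    show "finite ?S" using fin_sig by simp
    fix c and v :: "nat \<times> 'a qpath \<Rightarrow> 'k"
    assume c: "lincomb c ?S \<in> ?W" and v: "v \<in> ?S"
    then obtain b0 where b0: "b0 \<in> ?A" "v = pv b0" by auto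
    have "lincomb c ?S \<in> NN C (Suc l)" by (rule subsetD[OF at_vertex_sub c])
    from IH[unfolded CL_def, rule_format, OF this] obtain h' where h': "\<forall>b\<in>\<sigma>. plen (snd b) < Suc l \<longrightarrow> h' b = 0"
        "(\<lambda>y. lincomb c ?S y - (\<Sum>b\<in>\<sigma>. h' b * pv b y)) \<in> C"
      by blast
    let ?g = "\<lambda>b. if b \<in> ?A then c (pv b) else 0"
    have ls: "lincomb c ?S = (\<lambda>y. \<Sum>b\<in>\<sigma>. ?g b * pv b y)" by (rule lincomb_sig_sub) auto
    have eq: "(\<lambda>y. (\<Sum>b\<in>\<sigma>. ?g b * pv b y) - (\<Sum>b\<in>\<sigma>. h' b * pv b y)) = (\<lambda>y. \<Sum>b\<in>\<sigma>. (?g b - h' b) * pv b y)"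
      by (simp only: left_diff_distrib sum_subtractf)
    have "(\<lambda>y. \<Sum>b\<in>\<sigma>. (?g b - h' b) * pv b y) \<in> C"
      using h'(2) unfolding ls eq .
    then have "?g b0 - h' b0 = 0" by (rule crd_zero_comb[OF C]) (use b0 in simp)
    then show "c v = 0" using h' b0 by auto
  qed
  have "spans_mod ?W ?U ?S"
    using steinitz_mod[of ?W B' ?U ?S] sW B'(2) B'(4) B'(5) SU indS cardS by blast
  from this[unfolded spans_mod_def, rule_format, OF r] obtain c where c: "(\<lambda>y. r y - lincomb c ?S y) \<in> ?W"
    by blast
  have "(\<lambda>y. r y - lincomb c ?S y) \<in> NN C (Suc l)" by (rule subsetD[OF at_vertex_sub c])
  from IH[unfolded CL_def, rule_format, OF this] obtain h' where h': "\<forall>b\<in>\<sigma>. plen (snd b) < Suc l \<longrightarrow> h' b = 0"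
      "(\<lambda>y. (r y - lincomb c ?S y) - (\<Sum>b\<in>\<sigma>. h' b * pv b y)) \<in> C"
    by blast
  let ?H = "\<lambda>b. (if b \<in> ?A then c (pv b) else 0) + h' b"
  have ls: "lincomb c ?S = (\<lambda>y. \<Sum>b\<in>\<sigma>. (if b \<in> ?A then c (pv b) else 0) * pv b y)"
    by (rule lincomb_sig_sub) auto
  have "(\<lambda>y. r y - (\<Sum>b\<in>\<sigma>. ?H b * pv b y)) \<in> C"
  proof -
    have eq: "(\<lambda>y. (r y - (\<Sum>b\<in>\<sigma>. (if b \<in> ?A then c (pv b) else 0) * pv b y)) - (\<Sum>b\<in>\<sigma>. h' b * pv b y))
       = (\<lambda>y. r y - (\<Sum>b\<in>\<sigma>. ?H b * pv b y))"
      by (simp only: distrib_right sum.distrib diff_diff_add)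
    show ?thesis using h'(2) unfolding ls eq .
  qed
  moreover have "\<forall>b\<in>\<sigma>. plen (snd b) < l \<longrightarrow> ?H b = 0" using h'(1) by auto
  ultimately show ?thesis by (intro exI[of _ ?H] conjI)
qed

lemma claim:
  assumes C: "C \<in> GR" and l: "l \<le> Suc L"
  shows "CL C l"
  using l
proof (induction l rule: inc_induct)
  case base
  show ?case unfolding CL_def
  proof
    fix u assume "u \<in> NN C (Suc L)"
    then obtain w k where w: "w \<in> RP (Suc L)" and k: "k \<in> C" and u: "u = (\<lambda>y. w y + k y)"
      by (rule set_plusE)
    have "w \<in> C" using w RP_IPhat GR_D(2)[OF C] by blast
    then have "u \<in> C" using subsp_add[OF GR_subsp[OF C] _ k] u by simp
    then show "\<exists>h. (\<forall>b\<in>\<sigma>. plen (snd b) < Suc L \<longrightarrow> h b = 0) \<and> (\<lambda>y. u y - (\<Sum>b\<in>\<sigma>. h b * pv b y)) \<in> C"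
      by (intro exI[of _ "\<lambda>_. 0"]) simp
  qed
next
  case (step l)
  have lL: "l \<le> L" using step.hyps by simp
  show ?case unfolding CL_def
  proof
    fix u assume uN: "u \<in> NN C l"
    have uV: "u \<in> V" using NN_V[OF C uN] .
    obtain w k where w: "w \<in> RP l" and k: "k \<in> C" and u: "u = (\<lambda>y. w y + k y)"
      using uN by (rule set_plusE)
    have kV: "k \<in> V" using k GR_V[OF C] by blast
    have ri: "restr tgt i u \<in> at_vertex tgt i (NN C l)" if i: "i < n" for i
    proof -
      have "restr tgt i w \<in> RP l" using w restr_in_V by (auto simp: RPhat_def restr_def)
      moreover have "restr tgt i k \<in> C"
        using GR_pact[OF C pth_KQ k, of "(i, [])"] pact_ev[OF kV] i by simp
      moreover have "restr tgt i u = (\<lambda>y. restr tgt i w y + restr tgt i k y)"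
        by (auto simp: restr_def u)
      ultimately have "restr tgt i u \<in> NN C l" by (rule set_plusI)
      then show ?thesis by (auto simp: at_vertex_def restr_def)
    qed
    have "\<forall>i\<in>{..<n}. \<exists>H. (\<forall>b\<in>\<sigma>. plen (snd b) < l \<longrightarrow> H b = 0) \<and>
        (\<lambda>y. restr tgt i u y - (\<Sum>b\<in>\<sigma>. H b * pv b y)) \<in> C"
      using claim_vertex[OF C lL _ step.IH ri] by blast
    then obtain H where H: "\<forall>i\<in>{..<n}. (\<forall>b\<in>\<sigma>. plen (snd b) < l \<longrightarrow> H i b = 0) \<and>
        (\<lambda>y. restr tgt i u y - (\<Sum>b\<in>\<sigma>. H i b * pv b y)) \<in> C"
      by (rule bchoice[THEN exE]) blast
    have "(\<lambda>y. \<Sum>i<n. (restr tgt i u y - (\<Sum>b\<in>\<sigma>. H i b * pv b y))) \<in> C"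
      by (rule subsp_sum1[OF GR_subsp[OF C]]) (use H in auto)
    moreover have "(\<lambda>y. \<Sum>i<n. (restr tgt i u y - (\<Sum>b\<in>\<sigma>. H i b * pv b y)))
        = (\<lambda>y. u y - (\<Sum>b\<in>\<sigma>. (\<Sum>i<n. H i b) * pv b y))"
    proof
      fix y
      have "(\<Sum>i<n. \<Sum>b\<in>\<sigma>. H i b * pv b y) = (\<Sum>b\<in>\<sigma>. (\<Sum>i<n. H i b) * pv b y)"
        unfolding sum_distrib_right by (rule sum.swap)
      moreover have "(\<Sum>i<n. restr tgt i u y) = u y" using fun_cong[OF restr_sum[OF uV], of y] by simp
      ultimately show "(\<Sum>i<n. (restr tgt i u y - (\<Sum>b\<in>\<sigma>. H i b * pv b y)))
        = u y - (\<Sum>b\<in>\<sigma>. (\<Sum>i<n. H i b) * pv b y)" by (simp add: sum_subtractf)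
    qed
    moreover have "\<forall>b\<in>\<sigma>. plen (snd b) < l \<longrightarrow> (\<Sum>i<n. H i b) = 0" using H by simp
    ultimately show "\<exists>h. (\<forall>b\<in>\<sigma>. plen (snd b) < l \<longrightarrow> h b = 0) \<and> (\<lambda>y. u y - (\<Sum>b\<in>\<sigma>. h b * pv b y)) \<in> C"
      by auto
  qed
qed

lemma crd_short:
  assumes C: "C \<in> GR" and u: "u \<in> RP l" and l: "l \<le> Suc L" and b0: "b0 \<in> \<sigma>" "plen (snd b0) < l"
  shows "crd C u b0 = 0"
proof -
  have "u \<in> NN C l" using set_plusI[OF u subsp_zero[OF GR_subsp[OF C]], of u] by simp
  then obtain h where h: "\<forall>b\<in>\<sigma>. plen (snd b) < l \<longrightarrow> h b = 0" "(\<lambda>y. u y - (\<Sum>b\<in>\<sigma>. h b * pv b y)) \<in> C"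
    using claim[OF C l] unfolding CL_def by blast
  show ?thesis using crd_unique[OF C h(2) b0(1)] h(1) b0 by simp
qed

end


lemma pact_diff: "pact tgt f (\<lambda>y. u y - w y) = (\<lambda>z. pact tgt f u z - pact tgt f w z)"
  unfolding pact_def pmult_def by (intro ext) (simp add: left_diff_distrib sum_subtractf)

context qs
begin

definition phi :: "(nat \<times> 'a qpath \<Rightarrow> 'k) set \<Rightarrow> 'a \<Rightarrow> nat \<Rightarrow> nat \<Rightarrow> 'k" where
  "phi C = (\<lambda>\<alpha> j k. if \<alpha> \<in> Q1 \<and> j < d (tgt \<alpha>) \<and> k < d (src \<alpha>) then
      chart_coord (pv ` \<sigma>) (pact tgt (pth (arr \<alpha>)) (pv (bas (src \<alpha>) k))) (pv (bas (tgt \<alpha>) j)) C else 0)"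

lemma phi_box: "\<alpha> \<in> Q1 \<Longrightarrow> j < d (tgt \<alpha>) \<Longrightarrow> k < d (src \<alpha>) \<Longrightarrow>
    phi C \<alpha> j k = crd C (pact tgt (pth (arr \<alpha>)) (pv (bas (src \<alpha>) k))) (bas (tgt \<alpha>) j)"
  by (simp add: phi_def crd_def)

lemma phi_RA: "phi C \<in> RA"
  by (auto simp: phi_def rep_ambient_def)

definition coordvec :: "(nat \<times> 'a qpath \<Rightarrow> 'k) set \<Rightarrow> (nat \<times> 'a qpath \<Rightarrow> 'k) \<Rightarrow> nat \<Rightarrow> nat \<Rightarrow> 'k" where
  "coordvec C u = (\<lambda>i a. if i < n \<and> a < d i then crd C u (bas i a) else 0)"

lemma srcn: "\<alpha> \<in> Q1 \<Longrightarrow> src \<alpha> < n" and tgtn: "\<alpha> \<in> Q1 \<Longrightarrow> tgt \<alpha> < n" using Qv by auto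

lemma CC:
  assumes C: "C \<in> GR" and u: "u \<in> V" and \<alpha>: "\<alpha> \<in> Q1" and b': "b' \<in> \<sigma>"
  shows "crd C (pact tgt (pth (arr \<alpha>)) u) b' =
     (\<Sum>k<d (src \<alpha>). crd C u (bas (src \<alpha>) k) * crd C (pact tgt (pth (arr \<alpha>)) (pv (bas (src \<alpha>) k))) b')"
proof -
  let ?A = "\<lambda>v. pact tgt (pth (arr \<alpha>)) v"
  have sC: "subsp C" using GR_subsp[OF C] .
  have KQa: "pth (arr \<alpha>) \<in> KQ n Q1 src tgt" using pth_KQ[OF valid_arr[OF \<alpha>]] .
  have AV: "?A (pv b) \<in> V" if "b \<in> \<sigma>" for b
    using pact_pv_in_V[OF _ valid_arr[OF \<alpha>]] sig_good that by blast
  have w: "?A (\<lambda>y. u y - (\<Sum>b\<in>\<sigma>. crd C u b * pv b y)) \<in> C"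
    by (rule GR_pact[OF C KQa crd_spec[OF C u]])
  have w': "?A (\<lambda>y. u y - (\<Sum>b\<in>\<sigma>. crd C u b * pv b y)) = (\<lambda>z. ?A u z - (\<Sum>b\<in>\<sigma>. crd C u b * ?A (pv b) z))"
    unfolding pact_diff pact_lin_right ..
  have s2: "(\<lambda>z. \<Sum>b\<in>\<sigma>. crd C u b * (?A (pv b) z - (\<Sum>b''\<in>\<sigma>. crd C (?A (pv b)) b'' * pv b'' z))) \<in> C"
    by (rule subsp_sum[OF sC fin_sig]) (use crd_spec[OF C AV] in blast)
  have "(\<lambda>z. (?A u z - (\<Sum>b\<in>\<sigma>. crd C u b * ?A (pv b) z)) +
      (\<Sum>b\<in>\<sigma>. crd C u b * (?A (pv b) z - (\<Sum>b''\<in>\<sigma>. crd C (?A (pv b)) b'' * pv b'' z)))) \<in> C"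
    using subsp_add[OF sC w[unfolded w'] s2] .
  moreover have "(\<lambda>z. (?A u z - (\<Sum>b\<in>\<sigma>. crd C u b * ?A (pv b) z)) +
      (\<Sum>b\<in>\<sigma>. crd C u b * (?A (pv b) z - (\<Sum>b''\<in>\<sigma>. crd C (?A (pv b)) b'' * pv b'' z))))
    = (\<lambda>z. ?A u z - (\<Sum>b''\<in>\<sigma>. (\<Sum>b\<in>\<sigma>. crd C u b * crd C (?A (pv b)) b'') * pv b'' z))"
  proof
    fix z
    have "(\<Sum>b\<in>\<sigma>. crd C u b * (\<Sum>b''\<in>\<sigma>. crd C (?A (pv b)) b'' * pv b'' z))
        = (\<Sum>b''\<in>\<sigma>. (\<Sum>b\<in>\<sigma>. crd C u b * crd C (?A (pv b)) b'') * pv b'' z)"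
      unfolding sum_distrib_left sum_distrib_right mult.assoc by (rule sum.swap)
    then show "(?A u z - (\<Sum>b\<in>\<sigma>. crd C u b * ?A (pv b) z)) +
      (\<Sum>b\<in>\<sigma>. crd C u b * (?A (pv b) z - (\<Sum>b''\<in>\<sigma>. crd C (?A (pv b)) b'' * pv b'' z)))
      = ?A u z - (\<Sum>b''\<in>\<sigma>. (\<Sum>b\<in>\<sigma>. crd C u b * crd C (?A (pv b)) b'') * pv b'' z)"
      by (simp add: right_diff_distrib sum_subtractf)
  qed
  ultimately have "crd C (?A u) b' = (\<Sum>b\<in>\<sigma>. crd C u b * crd C (?A (pv b)) b')"
    using crd_unique[OF C _ b'] by simp
  also have "\<dots> = (\<Sum>b\<in>sig (src \<alpha>). crd C u b * crd C (?A (pv b)) b')"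
  proof (rule sum.mono_neutral_right[OF fin_sig])
    show "sig (src \<alpha>) \<subseteq> \<sigma>" by (auto simp: sig_def)
    show "\<forall>b\<in>\<sigma> - sig (src \<alpha>). crd C u b * crd C (?A (pv b)) b' = 0"
    proof
      fix b assume "b \<in> \<sigma> - sig (src \<alpha>)"
      then have "pnd (snd b) \<noteq> src \<alpha>" by (auto simp: sig_def)
      then have "?A (pv b) = (\<lambda>_. 0)" by (simp add: pact_pth_pv)
      then show "crd C u b * crd C (?A (pv b)) b' = 0"
        using crd_C[OF C subsp_zero[OF sC] b'] by simp
    qed
  qed
  also have "\<dots> = (\<Sum>k<d (src \<alpha>). crd C u (bas (src \<alpha>) k) * crd C (?A (pv (bas (src \<alpha>) k))) b')"
    using sum.reindex_bij_betw[OF bas_bij[of "src \<alpha>"], of "\<lambda>b. crd C u b * crd C (?A (pv b)) b'"]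
      card_sig[OF srcn[OF \<alpha>]] by simp
  finally show ?thesis .
qed

lemma ev_arr: "b < d (src \<alpha>) \<Longrightarrow> ev x (arr \<alpha>) a b = x \<alpha> a b"
proof -
  assume b: "b < d (src \<alpha>)"
  have "ev x (arr \<alpha>) a b = (\<Sum>l<d (src \<alpha>). x \<alpha> a l * (if l = b then 1 else 0))"
    using ev_snoc[of src d x "src \<alpha>" "[]" \<alpha>] by (simp add: arr_def ev_nil)
  also have "\<dots> = (\<Sum>l<d (src \<alpha>). if l = b then x \<alpha> a b else 0)" by (rule sum.cong) auto
  also have "\<dots> = x \<alpha> a b" using b by simp
  finally show ?thesis .
qed

lemma Phi_phi:
  assumes C: "C \<in> GR"
  shows "good (r, (i, as)) \<Longrightarrow> Phi (phi C) (r, (i, as)) = coordvec C (pv (r, (i, as)))"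
proof (induction as rule: rev_induct)
  case Nil
  then have r: "r < t" and i: "i = e r" by (auto simp: good_def)
  have z: "(r, (i, [])) \<in> \<sigma>" using z_in[OF r] i by simp
  show ?case
  proof (intro ext)
    fix k a
    show "Phi (phi C) (r, (i, [])) k a = coordvec C (pv (r, (i, []))) k a"
    proof (cases "k < n \<and> a < d k")
      case True
      have "(bas k a = (r, (i, []))) \<longleftrightarrow> (k = i \<and> a = iz r)"
        using bas_ix[OF z] bas_in[of k a] ix_bas[of k a] True i by (auto simp: iz_def)
      then show ?thesis using True crd_sig[OF C z, of "bas k a"] bas_in[of k a]
        by (auto simp: Phi_def coordvec_def ev_nil)
    next
      case False
      then show ?thesis by (auto simp: Phi_def coordvec_def)
    qed
  qed
next
  case (snoc \<alpha> as)
  have g: "good (r, (i, as))" and \<alpha>: "\<alpha> \<in> Q1" and s: "src \<alpha> = pnd (i, as)"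
    using snoc.prems by (auto simp: good_def valid_snoc)
  let ?ya = "(r, (i, as))" and ?y = "(r, (i, as @ [\<alpha>]))"
  have yc: "?y = cat ?ya (arr \<alpha>)" unfolding cat_def arr_def fst_conv snd_conv by (rule refl)
  have fa: "fst (arr \<alpha>) = pnd (snd ?ya)" using s by simp
  have pA: "pact tgt (pth (arr \<alpha>)) (pv ?ya) = pv ?y" unfolding pact_pth_pv[of tgt "arr \<alpha>" ?ya] if_P[OF fa] yc ..
  have gy: "good ?y" using snoc.prems .
  have y0V: "pv ?ya \<in> V" using pv_in_V[OF g] .
  have "Phi (phi C) ?y = ma (phi C) (pth (arr \<alpha>)) (Phi (phi C) ?ya)"
    using Phi_arr[OF phi_RA g \<alpha>] s yc by simp
  also have "\<dots> = ma (phi C) (pth (arr \<alpha>)) (coordvec C (pv ?ya))" using snoc.IH[OF g] by simp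
  also have "\<dots> = coordvec C (pv ?y)"
  proof (intro ext)
    fix j a
    show "ma (phi C) (pth (arr \<alpha>)) (coordvec C (pv ?ya)) j a = coordvec C (pv ?y) j a"
    proof (cases "j < n \<and> a < d j")
      case False then show ?thesis by (auto simp: mact_pth coordvec_def)
    next
      case True
      show ?thesis
      proof (cases "j = tgt \<alpha>")
        case True2: True
        have "ma (phi C) (pth (arr \<alpha>)) (coordvec C (pv ?ya)) j a =
            (\<Sum>b<d (src \<alpha>). ev (phi C) (arr \<alpha>) a b * coordvec C (pv ?ya) (src \<alpha>) b)"
          using True True2 by (simp add: mact_pth)
        also have "\<dots> = (\<Sum>b<d (src \<alpha>). crd C (pv ?ya) (bas (src \<alpha>) b) * crd C (pact tgt (pth (arr \<alpha>)) (pv (bas (src \<alpha>) b))) (bas j a))"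
          using True True2 \<alpha> srcn[OF \<alpha>] by (intro sum.cong refl) (simp add: ev_arr phi_box coordvec_def)
        also have "\<dots> = crd C (pv ?y) (bas j a)"
          using CC[OF C y0V \<alpha> bas_in[of j a, THEN conjunct1]] True pA by simp
        also have "\<dots> = coordvec C (pv ?y) j a" using True by (simp add: coordvec_def)
        finally show ?thesis .
      next
        case False2: False
        have "coordvec C (pv ?y) j a = crd C (pv ?y) (bas j a)" using True by (simp add: coordvec_def)
        also have "\<dots> = 0"
        proof (rule crd_vertex[OF C pv_in_V[OF gy] tgtn[OF \<alpha>]])
          show "\<forall>z. pv ?y z \<noteq> 0 \<longrightarrow> pnd (snd z) = tgt \<alpha>" by (auto simp: path_vec_def)
          show "bas j a \<in> \<sigma>" "pnd (snd (bas j a)) \<noteq> tgt \<alpha>" using bas_in[of j a] True False2 by auto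
        qed
        finally show ?thesis using False2 by (simp add: mact_pth)
      qed
    qed
  qed
  finally show ?case .
qed

lemma Phi_phi': "C \<in> GR \<Longrightarrow> good y \<Longrightarrow> Phi (phi C) y = coordvec C (pv y)"
  using Phi_phi[of C "fst y" "fst (snd y)" "snd (snd y)"] by (cases y) auto

lemma Psi_phi:
  assumes C: "C \<in> GR" and u: "u \<in> V"
  shows "Psi (phi C) u = coordvec C u"
proof (intro ext)
  fix i a
  have gy: "good y" if "y \<in> supp u" for y using V_good[OF u] that by (simp add: supp_def)
  have "Psi (phi C) u i a = (\<Sum>y\<in>supp u. u y * coordvec C (pv y) i a)"
    unfolding Psi_def using Phi_phi'[OF C gy] by simp
  also have "\<dots> = coordvec C u i a"
  proof (cases "i < n \<and> a < d i")
    case True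
    have "crd C (\<lambda>z. \<Sum>y\<in>supp u. u y * pv y z) (bas i a) = (\<Sum>y\<in>supp u. u y * crd C (pv y) (bas i a))"
      by (rule crd_lin[OF C V_fin[OF u]]) (use pv_in_V gy bas_in True in auto)
    then show ?thesis using True decomp[OF u] by (simp add: coordvec_def)
  next
    case False then show ?thesis by (auto simp: coordvec_def)
  qed
  finally show "Psi (phi C) u i a = coordvec C u i a" .
qed

lemma Cx_phi:
  assumes C: "C \<in> GR"
  shows "Cx (phi C) = C"
proof
  show "Cx (phi C) \<subseteq> C"
  proof
    fix u assume "u \<in> Cx (phi C)"
    then have u: "u \<in> V" and z: "coordvec C u = (\<lambda>_ _. 0)" using Psi_phi[OF C] by (auto simp: Cx_def)
    have "crd C u b = 0" if b: "b \<in> \<sigma>" for b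
    proof -
      have "coordvec C u (pnd (snd b)) (ix b) = 0" using z by simp
      then show ?thesis using b sig_pnd ix_lt bas_ix by (simp add: coordvec_def)
    qed
    then show "u \<in> C" using crd_zero_in[OF C u] by blast
  qed
  show "C \<subseteq> Cx (phi C)"
  proof
    fix u assume uC: "u \<in> C"
    then have u: "u \<in> V" using GR_V[OF C] by blast
    have "crd C u (bas i a) = 0" if "i < n" "a < d i" for i a
      using crd_C[OF C uC bas_in[OF that, THEN conjunct1]] .
    then have "coordvec C u = (\<lambda>_ _. 0)" by (auto simp: coordvec_def intro!: ext)
    then show "u \<in> Cx (phi C)" using Psi_phi[OF C u] u by (simp add: Cx_def)
  qed
qed

end


context qs
begin

lemma coordvec_sig:
  assumes C: "C \<in> GR" and b: "b \<in> \<sigma>"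
  shows "coordvec C (pv b) = uv b"
proof (intro ext)
  fix k a
  show "coordvec C (pv b) k a = uv b k a"
  proof (cases "k < n \<and> a < d k")
    case True
    have "(bas k a = b) \<longleftrightarrow> (k = pnd (snd b) \<and> a = ix b)"
      using bas_ix[OF b] bas_in[of k a] ix_bas[of k a] True by auto
    then show ?thesis using True crd_sig[OF C b, of "bas k a"] bas_in[of k a]
      by (auto simp: coordvec_def unitv_def)
  next
    case False
    then show ?thesis using ix_lt[OF b] sig_pnd[OF b] by (auto simp: coordvec_def unitv_def)
  qed
qed

lemma good_RP: "good y \<Longrightarrow> pv y \<in> RP (plen (snd y))"
  using pv_in_V by (auto simp: RPhat_def path_vec_def)

lemma ideal_I: "is_ideal_KQ n Q1 src tgt I" using adm by (simp add: admissible_def)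

lemma I_KQ: "I \<subseteq> KQ n Q1 src tgt" using ideal_I by (simp add: is_ideal_KQ_def)

lemma pmult_zero: "pmult tgt f (\<lambda>_. 0) = (\<lambda>_. 0)" by (simp add: pmult_def)

lemma pact_rho_IPhat:
  assumes rho: "\<rho> \<in> I" and b: "b \<in> \<sigma>"
  shows "pact tgt \<rho> (pv b) \<in> IPhat n Q1 src tgt t e I"
proof -
  have gb: "good b" using sig_good[OF b] by simp
  have rK: "\<rho> \<in> KQ n Q1 src tgt" using rho I_KQ by blast
  have "(\<lambda>q. pact tgt \<rho> (pv b) (r, q)) \<in> I" for r
  proof (cases "r = fst b")
    case True
    have "(\<lambda>q'. pv b (r, q')) = pth (snd b)" using True by (cases b) (auto simp: path_vec_def pth_def)
    then have "(\<lambda>q. pact tgt \<rho> (pv b) (r, q)) = pmult tgt \<rho> (pth (snd b))" by (simp add: pact_def)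
    moreover have "pth (snd b) \<in> KQ n Q1 src tgt" by (rule pth_KQ) (use gb in \<open>simp add: good_def\<close>)
    ultimately show ?thesis using ideal_I rho unfolding is_ideal_KQ_def by auto
  next
    case False
    have "(\<lambda>q'. pv b (r, q')) = (\<lambda>_. 0)" using False by (cases b) (auto simp: path_vec_def)
    then have "(\<lambda>q. pact tgt \<rho> (pv b) (r, q)) = (\<lambda>_. 0)" by (simp add: pact_def pmult_zero)
    then show ?thesis using ideal_I by (simp add: is_ideal_KQ_def)
  qed
  moreover have "pact tgt \<rho> (pv b) \<in> V" using pact_in_V[OF rK pv_in_V[OF gb]] .
  ultimately show ?thesis by (simp add: IPhat_def)
qed

lemma phi_Rep:
  assumes C: "C \<in> GR"
  shows "phi C \<in> Rep n Q1 src tgt I d"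
  unfolding Rep_def
proof (intro CollectI conjI phi_RA ballI allI impI)
  let ?x = "phi C"
  fix \<rho> i j a b
  assume rho: "\<rho> \<in> I" and i: "i < n" and j: "j < n" and a: "a < d j" and b: "b < d i"
  let ?\<beta> = "bas i b"
  have \<beta>: "?\<beta> \<in> \<sigma>" "pnd (snd ?\<beta>) = i" "ix ?\<beta> = b" using bas_in[OF i b] ix_bas[OF i b] by auto
  have rK: "\<rho> \<in> KQ n Q1 src tgt" using rho I_KQ by blast
  have g\<beta>: "good ?\<beta>" using sig_good[OF \<beta>(1)] by simp
  have uC: "pact tgt \<rho> (pv ?\<beta>) \<in> C" using pact_rho_IPhat[OF rho \<beta>(1)] GR_D(2)[OF C] by blast
  have uV: "pact tgt \<rho> (pv ?\<beta>) \<in> V" using uC GR_V[OF C] by blast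
  have "Psi ?x (pact tgt \<rho> (pv ?\<beta>)) = coordvec C (pact tgt \<rho> (pv ?\<beta>))" by (rule Psi_phi[OF C uV])
  also have "\<dots> = (\<lambda>_ _. 0)"
  proof -
    have "crd C (pact tgt \<rho> (pv ?\<beta>)) (bas k a') = 0" if "k < n" "a' < d k" for k a'
      using crd_C[OF C uC bas_in[OF that, THEN conjunct1]] .
    then show ?thesis by (auto simp: coordvec_def intro!: ext)
  qed
  finally have z: "Psi ?x (pact tgt \<rho> (pv ?\<beta>)) = (\<lambda>_ _. 0)" .
  have "Psi ?x (pact tgt \<rho> (pv ?\<beta>)) = ma ?x \<rho> (uv ?\<beta>)"
    using hom[OF phi_RA rK pv_in_V[OF g\<beta>]] Psi_pv Phi_phi'[OF C g\<beta>] coordvec_sig[OF C \<beta>(1)] by simp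
  then have "ma ?x \<rho> (uv ?\<beta>) = (\<lambda>_ _. 0)" using z by simp
  then have "ma ?x \<rho> (uv ?\<beta>) j a = 0" by simp
  moreover have "ma ?x \<rho> (uv ?\<beta>) j a =
      (\<Sum>p\<in>{p. \<rho> p \<noteq> 0 \<and> fst p = i \<and> pend tgt p = j}. \<rho> p * ev ?x p a b)"
  proof -
    have fA: "finite {p. \<rho> p \<noteq> 0 \<and> pend tgt p = j}"
      using KQ_fin[OF rK] by (auto simp: supp_def intro: finite_subset)
    have inner: "(\<Sum>c<d (fst p). ev ?x p a c * uv ?\<beta> (fst p) c) = (if fst p = i then ev ?x p a b else 0)" for p
    proof (cases "fst p = i")
      case True
      have "(\<Sum>c<d (fst p). ev ?x p a c * uv ?\<beta> (fst p) c) = (\<Sum>c<d (fst p). if c = b then ev ?x p a b else 0)"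
        using True \<beta> by (intro sum.cong) (auto simp: unitv_def)
      then show ?thesis using True b by simp
    next
      case False
      then show ?thesis using \<beta> by (simp add: unitv_def)
    qed
    have "ma ?x \<rho> (uv ?\<beta>) j a = (\<Sum>p\<in>{p. \<rho> p \<noteq> 0 \<and> pend tgt p = j}. \<rho> p * (if fst p = i then ev ?x p a b else 0))"
      using j a by (simp add: mact_def inner)
    also have "\<dots> = (\<Sum>p\<in>{p. \<rho> p \<noteq> 0 \<and> pend tgt p = j}. if fst p = i then \<rho> p * ev ?x p a b else 0)"
      by (rule sum.cong) auto
    also have "\<dots> = (\<Sum>p\<in>{p\<in>{p. \<rho> p \<noteq> 0 \<and> pend tgt p = j}. fst p = i}. \<rho> p * ev ?x p a b)"
      by (rule sum.inter_filter[OF fA, symmetric])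
    also have "{p\<in>{p. \<rho> p \<noteq> 0 \<and> pend tgt p = j}. fst p = i} = {p. \<rho> p \<noteq> 0 \<and> fst p = i \<and> pend tgt p = j}"
      by auto
    finally show ?thesis .
  qed
  ultimately show "(\<Sum>p\<in>{p. \<rho> p \<noteq> 0 \<and> fst p = i \<and> pend tgt p = j}. \<rho> p * ev ?x p a b) = 0" by simp
qed

lemma phi_Z0:
  assumes C: "C \<in> GR"
  shows "phi C \<in> Z0"
proof -
  have Pb: "Pb (phi C)" unfolding Pb_def
    using Phi_phi'[OF C] sig_good coordvec_sig[OF C] by auto
  have Pc: "Pc (phi C)" unfolding Pc_def
  proof (intro ballI impI)
    fix b \<alpha> b'
    assume b: "b \<in> \<sigma>" and \<alpha>: "\<alpha> \<in> Q1" and s: "src \<alpha> = pnd (snd b)" and b': "b' \<in> \<sigma>"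
      and pb': "pnd (snd b') = tgt \<alpha>" and lb': "plen (snd b') \<le> plen (snd b)"
    let ?y = "cat b (arr \<alpha>)"
    have gy: "good ?y" using good_cat[OF _ valid_arr[OF \<alpha>]] sig_good[OF b] s by simp
    have ly: "plen (snd ?y) = Suc (plen (snd b))" by simp
    have "Phi (phi C) ?y (tgt \<alpha>) (ix b') = coordvec C (pv ?y) (tgt \<alpha>) (ix b')" using Phi_phi'[OF C gy] by simp
    also have "\<dots> = crd C (pv ?y) b'"
      using tgtn[OF \<alpha>] ix_lt[OF b'] pb' bas_ix[OF b'] by (simp add: coordvec_def)
    also have "\<dots> = 0"
      by (rule crd_short[OF C good_RP[OF gy]]) (use sig_good[OF b] b' lb' ly in auto)
    finally show "Phi (phi C) ?y (tgt \<alpha>) (ix b') = 0" .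
  qed
  show ?thesis using phi_Rep[OF C] Pb Pc by (simp add: Z0_def)
qed

lemma crd_Cx:
  assumes x: "x \<in> Z0" and v: "v \<in> V" and b0: "b0 \<in> \<sigma>"
  shows "chart_coord (pv ` \<sigma>) v (pv b0) (Cx x) = Psi x v (pnd (snd b0)) (ix b0)"
proof -
  let ?h = "\<lambda>b. Psi x v (pnd (snd b)) (ix b)"
  have lc: "lincomb (\<lambda>w. ?h (inv_into \<sigma> pv w)) (pv ` \<sigma>) = (\<lambda>z. \<Sum>b\<in>\<sigma>. ?h b * pv b z)"
    by (rule lincomb_pv_inv)
  have "(\<lambda>y. v y - lincomb (\<lambda>w. ?h (inv_into \<sigma> pv w)) (pv ` \<sigma>) y) \<in> Cx x"
    unfolding lc using expand_Psi[OF x v] .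
  from coord_unique[OF Cx_subsp Cx_indep[OF x] this] b0 pv_inv[OF b0]
  show ?thesis by simp
qed

lemma phi_Cx:
  assumes x: "x \<in> Z0"
  shows "phi (Cx x) = x"
proof (intro ext)
  fix \<alpha> j k
  show "phi (Cx x) \<alpha> j k = x \<alpha> j k"
  proof (cases "\<alpha> \<in> Q1 \<and> j < d (tgt \<alpha>) \<and> k < d (src \<alpha>)")
    case False
    then have "x \<alpha> j k = 0" using Z0_RA[OF x] by (auto simp: rep_ambient_def)
    then show ?thesis using False by (auto simp: phi_def)
  next
    case True
    then have \<alpha>: "\<alpha> \<in> Q1" and j: "j < d (tgt \<alpha>)" and k: "k < d (src \<alpha>)" by auto
    let ?bk = "bas (src \<alpha>) k" and ?bj = "bas (tgt \<alpha>) j"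
    have bk: "?bk \<in> \<sigma>" "pnd (snd ?bk) = src \<alpha>" "ix ?bk = k" using bas_in[OF srcn[OF \<alpha>] k] ix_bas[OF srcn[OF \<alpha>] k] by auto
    have bj: "?bj \<in> \<sigma>" "pnd (snd ?bj) = tgt \<alpha>" "ix ?bj = j" using bas_in[OF tgtn[OF \<alpha>] j] ix_bas[OF tgtn[OF \<alpha>] j] by auto
    have gk: "good ?bk" using sig_good[OF bk(1)] by simp
    have AV: "pact tgt (pth (arr \<alpha>)) (pv ?bk) \<in> V" using pact_pv_in_V[OF gk valid_arr[OF \<alpha>]] .
    have "phi (Cx x) \<alpha> j k = Psi x (pact tgt (pth (arr \<alpha>)) (pv ?bk)) (tgt \<alpha>) j"
      using crd_Cx[OF x AV bj(1)] bj True by (simp add: phi_def)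
    also have "\<dots> = ma x (pth (arr \<alpha>)) (uv ?bk) (tgt \<alpha>) j"
      using hom1[OF Z0_RA[OF x] gk valid_arr[OF \<alpha>]] Pb_D[OF x bk(1)] by simp
    also have "\<dots> = (\<Sum>b<d (src \<alpha>). ev x (arr \<alpha>) j b * uv ?bk (src \<alpha>) b)"
      using tgtn[OF \<alpha>] j by (simp add: mact_pth)
    also have "\<dots> = (\<Sum>b<d (src \<alpha>). if b = k then x \<alpha> j k else 0)"
      using bk by (intro sum.cong refl) (auto simp: ev_arr unitv_def)
    also have "\<dots> = x \<alpha> j k" using k by simp
    finally show ?thesis .
  qed
qed

end


lemma polys_sum:
  assumes "\<forall>w\<in>F. g w \<in> polys_over A"
  shows "(\<lambda>x. \<Sum>w\<in>F. g w x) \<in> polys_over A"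
proof (cases "finite F")
  case True
  then show ?thesis using assms
  proof (induction F rule: finite_induct)
    case empty then show ?case using polys_over.const[of 0 A] by simp
  next
    case (insert w F)
    then show ?case using polys_over.add[of "g w" A "\<lambda>x. \<Sum>w\<in>F. g w x"] by simp
  qed
next
  case False
  then show ?thesis using polys_over.const[of 0 A] by simp
qed

lemma polys_cmult: "f \<in> polys_over A \<Longrightarrow> (\<lambda>x. c * f x) \<in> polys_over A"
  using polys_over.mult[OF polys_over.const] by blast

lemma polys_diff: "f \<in> polys_over A \<Longrightarrow> g \<in> polys_over A \<Longrightarrow> (\<lambda>x. f x - g x) \<in> polys_over A"
  using polys_over.add[of f A "\<lambda>x. (-1) * g x"] polys_cmult[of g A "-1"] by simp

lemma ev_poly: "(\<lambda>x :: 'a \<Rightarrow> nat \<Rightarrow> nat \<Rightarrow> 'k::field. eval_path src d x (i, as) a b) \<in> polys_over rep_coords"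
proof (induction as arbitrary: a rule: rev_induct)
  case Nil
  have e: "(\<lambda>x :: 'a \<Rightarrow> nat \<Rightarrow> nat \<Rightarrow> 'k. eval_path src d x (i, []) a b) = (\<lambda>_. if a = b then 1 else 0)" by (simp add: ev_nil)
  show ?case unfolding e by (rule polys_over.const)
next
  case (snoc \<alpha> as)
  have atom: "(\<lambda>x :: 'a \<Rightarrow> nat \<Rightarrow> nat \<Rightarrow> 'k. x \<alpha> a l) \<in> polys_over rep_coords" for l
    by (rule polys_over.atom) (auto simp: rep_coords_def)
  have m: "(\<lambda>x :: 'a \<Rightarrow> nat \<Rightarrow> nat \<Rightarrow> 'k. x \<alpha> a l * eval_path src d x (i, as) l b) \<in> polys_over rep_coords" for l
    using polys_over.mult[OF atom[of l] snoc.IH[of l]] .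
  have "(\<lambda>x :: 'a \<Rightarrow> nat \<Rightarrow> nat \<Rightarrow> 'k. \<Sum>l<d (src \<alpha>). x \<alpha> a l * eval_path src d x (i, as) l b) \<in> polys_over rep_coords"
    by (rule polys_sum) (use m in blast)
  then show ?case by (simp add: ev_snoc)
qed

lemma ev_poly': "(\<lambda>x :: 'a \<Rightarrow> nat \<Rightarrow> nat \<Rightarrow> 'k::field. eval_path src d x p a b) \<in> polys_over rep_coords"
  using ev_poly[of src d "fst p" "snd p" a b] by simp

context qs
begin

lemma Phi_poly: "(\<lambda>x. Phi x y i a) \<in> polys_over rep_coords"
proof (cases "i = pnd (snd y) \<and> i < n \<and> a < d i")
  case True
  then have e: "(\<lambda>x. Phi x y i a) = (\<lambda>x. ev x (snd y) a (iz (fst y)))" by (auto simp: Phi_def)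
  show ?thesis unfolding e by (rule ev_poly')
next
  case False
  then have e: "(\<lambda>x. Phi x y i a) = (\<lambda>_. 0)" by (auto simp: Phi_def)
  show ?thesis unfolding e by (rule polys_over.const)
qed

lemma Psi_poly: "(\<lambda>x. Psi x u i a) \<in> polys_over rep_coords"
  unfolding Psi_def by (rule polys_sum) (auto intro: polys_cmult Phi_poly)

lemma Z0_closed: "zariski_closed_rep Q1 src tgt d Z0"
proof -
  define f1 where "f1 = (\<lambda>(\<rho> :: 'a qpath \<Rightarrow> 'k, i, j, a, b). (\<lambda>x :: 'a \<Rightarrow> nat \<Rightarrow> nat \<Rightarrow> 'k. \<Sum>p\<in>{p. \<rho> p \<noteq> 0 \<and> fst p = i \<and> pend tgt p = j}. \<rho> p * ev x p a b))"
  define G1 where "G1 = f1 ` {(\<rho>, i, j, a, b). \<rho> \<in> I \<and> i < n \<and> j < n \<and> a < d j \<and> b < d i}"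
  define f2 where "f2 = (\<lambda>(b, i, a). (\<lambda>x :: 'a \<Rightarrow> nat \<Rightarrow> nat \<Rightarrow> 'k. Phi x b i a - uv b i a))"
  define G2 where "G2 = f2 ` (\<sigma> \<times> UNIV \<times> UNIV)"
  define f3 where "f3 = (\<lambda>(b, \<alpha>, b'). (\<lambda>x :: 'a \<Rightarrow> nat \<Rightarrow> nat \<Rightarrow> 'k. Phi x (cat b (arr \<alpha>)) (tgt \<alpha>) (ix b')))"
  define G3 where "G3 = f3 ` {(b, \<alpha>, b'). b \<in> \<sigma> \<and> \<alpha> \<in> Q1 \<and> src \<alpha> = pnd (snd b) \<and> cat b (arr \<alpha>) \<notin> \<sigma> \<and> b' \<in> \<sigma> \<and>
      pnd (snd b') = tgt \<alpha> \<and> plen (snd b') \<le> plen (snd b)}"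
  have P1: "G1 \<subseteq> polys_over rep_coords"
  proof
    fix g assume "g \<in> G1"
    then obtain \<rho> i j a b where g: "g = f1 (\<rho>, i, j, a, b)" unfolding G1_def by auto
    show "g \<in> polys_over rep_coords" unfolding g f1_def prod.case
      by (rule polys_sum) (auto intro: polys_cmult ev_poly')
  qed
  have P2: "G2 \<subseteq> polys_over rep_coords"
  proof
    fix g assume "g \<in> G2"
    then obtain b i a where g: "g = f2 (b, i, a)" unfolding G2_def by auto
    show "g \<in> polys_over rep_coords" unfolding g f2_def prod.case
      by (rule polys_diff[OF Phi_poly polys_over.const])
  qed
  have P3: "G3 \<subseteq> polys_over rep_coords"
  proof
    fix g assume "g \<in> G3"
    then obtain b \<alpha> b' where g: "g = f3 (b, \<alpha>, b')" unfolding G3_def by auto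
    show "g \<in> polys_over rep_coords" unfolding g f3_def prod.case by (rule Phi_poly)
  qed
  have eq: "Z0 = {x \<in> RA. \<forall>g\<in>G1 \<union> G2 \<union> G3. g x = 0}"
  proof (intro set_eqI iffI)
    fix x assume x: "x \<in> Z0"
    then have xr: "x \<in> RA" by (rule Z0_RA)
    have rel: "\<forall>\<rho>\<in>I. \<forall>i<n. \<forall>j<n. \<forall>a<d j. \<forall>b<d i.
        (\<Sum>p\<in>{p. \<rho> p \<noteq> 0 \<and> fst p = i \<and> pend tgt p = j}. \<rho> p * ev x p a b) = 0"
      using x by (simp add: Z0_def Rep_def)
    have g1: "g x = 0" if "g \<in> G1" for g
    proof -
      from that obtain \<rho> i j a b where g: "g = f1 (\<rho>, i, j, a, b)" and c: "\<rho> \<in> I" "i < n" "j < n" "a < d j" "b < d i"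
        unfolding G1_def by auto
      show ?thesis unfolding g f1_def prod.case using rel c by blast
    qed
    have g2: "g x = 0" if "g \<in> G2" for g
    proof -
      from that obtain b i a where g: "g = f2 (b, i, a)" and c: "b \<in> \<sigma>" unfolding G2_def by auto
      show ?thesis unfolding g f2_def prod.case using Pb_D[OF x c] by simp
    qed
    have pc: "Pc x" using x by (simp add: Z0_def)
    have g3: "g x = 0" if "g \<in> G3" for g
    proof -
      from that obtain b \<alpha> b' where g: "g = f3 (b, \<alpha>, b')" and c: "b \<in> \<sigma>" "\<alpha> \<in> Q1" "src \<alpha> = pnd (snd b)"
        "cat b (arr \<alpha>) \<notin> \<sigma>" "b' \<in> \<sigma>" "pnd (snd b') = tgt \<alpha>" "plen (snd b') \<le> plen (snd b)"
        unfolding G3_def by auto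
      show ?thesis unfolding g f3_def prod.case using pc c unfolding Pc_def by blast
    qed
    show "x \<in> {x \<in> RA. \<forall>g\<in>G1 \<union> G2 \<union> G3. g x = 0}" using xr g1 g2 g3 by blast
  next
    fix x assume x: "x \<in> {x \<in> RA. \<forall>g\<in>G1 \<union> G2 \<union> G3. g x = 0}"
    then have xr: "x \<in> RA" and gz: "\<And>g. g \<in> G1 \<union> G2 \<union> G3 \<Longrightarrow> g x = 0" by auto
    have "x \<in> Rep n Q1 src tgt I d"
      unfolding Rep_def
    proof (intro CollectI conjI xr ballI allI impI)
      fix \<rho> i j a b assume "\<rho> \<in> I" "i < n" "j < n" "a < d j" "b < d i"
      then have "f1 (\<rho>, i, j, a, b) \<in> G1" unfolding G1_def by (intro imageI) simp
      then have "f1 (\<rho>, i, j, a, b) x = 0" using gz by blast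
      then show "(\<Sum>p\<in>{p. \<rho> p \<noteq> 0 \<and> fst p = i \<and> pend tgt p = j}. \<rho> p * ev x p a b) = 0"
        by (simp add: f1_def)
    qed
    moreover have "Pb x" unfolding Pb_def
    proof
      fix b assume b: "b \<in> \<sigma>"
      have "Phi x b i a - uv b i a = 0" for i a
      proof -
        have "f2 (b, i, a) \<in> G2" unfolding G2_def using b by (intro imageI) simp
        then have "f2 (b, i, a) x = 0" using gz by blast
        then show ?thesis by (simp add: f2_def)
      qed
      then show "Phi x b = uv b" by (intro ext) simp
    qed
    moreover have "Pc x" unfolding Pc_def
    proof (intro ballI impI)
      fix b \<alpha> b' assume "b \<in> \<sigma>" "\<alpha> \<in> Q1" "src \<alpha> = pnd (snd b)" "cat b (arr \<alpha>) \<notin> \<sigma>" "b' \<in> \<sigma>"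
        "pnd (snd b') = tgt \<alpha>" "plen (snd b') \<le> plen (snd b)"
      then have "f3 (b, \<alpha>, b') \<in> G3" unfolding G3_def by (intro imageI) simp
      then have "f3 (b, \<alpha>, b') x = 0" using gz by blast
      then show "Phi x (cat b (arr \<alpha>)) (tgt \<alpha>) (ix b') = 0" by (simp add: f3_def)
    qed
    ultimately show "x \<in> Z0" by (simp add: Z0_def)
  qed
  have "G1 \<union> G2 \<union> G3 \<subseteq> polys_over rep_coords" using P1 P2 P3 by blast
  then show ?thesis unfolding zariski_closed_rep_def using eq by blast
qed

lemma sigV: "pv ` \<sigma> \<subseteq> V" using pv_in_V sig_good by auto

lemma rep_to_gr: "rep_to_gr_morphism V Z0 Cx"
  unfolding rep_to_gr_morphism_def
proof (intro ballI)
  fix z assume z: "z \<in> Z0"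
  let ?h = "\<lambda>_::'a \<Rightarrow> nat \<Rightarrow> nat \<Rightarrow> 'k. (1::'k)"
  have h: "?h \<in> polys_over rep_coords" by (rule polys_over.const)
  have ic: "\<forall>z'\<in>Z0. ?h z' \<noteq> 0 \<longrightarrow> in_chart V (pv ` \<sigma>) (Cx z')"
    using sigV Cx_indep Cx_spans by (auto simp: in_chart_def)
  have rg: "\<forall>v\<in>V. \<forall>s\<in>pv ` \<sigma>. regular_on rep_coords {z'\<in>Z0. ?h z' \<noteq> 0} (\<lambda>z'. chart_coord (pv ` \<sigma>) v s (Cx z'))"
  proof (intro ballI)
    fix v s assume v: "v \<in> V" and s: "s \<in> pv ` \<sigma>"
    then obtain b0 where b0: "b0 \<in> \<sigma>" "s = pv b0" by auto
    have eqf: "\<forall>y\<in>{z'\<in>Z0. ?h z' \<noteq> 0}. ?h y \<noteq> 0 \<longrightarrow> chart_coord (pv ` \<sigma>) v s (Cx y) = Psi y v (pnd (snd b0)) (ix b0) / ?h y"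
      using crd_Cx[OF _ v b0(1)] b0 by simp
    show "regular_on rep_coords {z'\<in>Z0. ?h z' \<noteq> 0} (\<lambda>z'. chart_coord (pv ` \<sigma>) v s (Cx z'))"
      unfolding regular_on_def
      using Psi_poly[of v "pnd (snd b0)" "ix b0"] h eqf
      by (intro ballI bexI[of _ "\<lambda>x. Psi x v (pnd (snd b0)) (ix b0)"] bexI[of _ ?h] conjI) auto
  qed
  show "\<exists>S. \<exists>h\<in>polys_over rep_coords. h z \<noteq> 0 \<and> (\<forall>z'\<in>Z0. h z' \<noteq> 0 \<longrightarrow> in_chart V S (Cx z')) \<and>
          (\<forall>v\<in>V. \<forall>s\<in>S. regular_on rep_coords {z' \<in> Z0. h z' \<noteq> 0} (\<lambda>z'. chart_coord S v s (Cx z')))"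
    using h ic rg by (intro exI[of _ "pv ` \<sigma>"] bexI[of _ ?h]) auto
qed

lemma gr_to_rep: "gr_to_rep_morphism V GR phi"
  unfolding gr_to_rep_morphism_def gr_regular_on_def
proof (intro allI ballI)
  fix \<alpha> j k and W assume W: "W \<in> GR"
  let ?S = "pv ` \<sigma>"
  let ?h = "\<lambda>_::(nat \<times> 'a qpath \<Rightarrow> 'k) set. (1::'k)"
  have icW: "in_chart V ?S W" using GR_D(4,5)[OF W] sigV by (simp add: in_chart_def)
  have h: "?h \<in> polys_over (chart_atoms V ?S)" by (rule polys_over.const)
  show "\<exists>S. in_chart V S W \<and> (\<exists>g\<in>polys_over (chart_atoms V S). \<exists>h\<in>polys_over (chart_atoms V S).
      h W \<noteq> 0 \<and> (\<forall>W'\<in>GR. in_chart V S W' \<longrightarrow> h W' \<noteq> 0 \<longrightarrow> phi W' \<alpha> j k = g W' / h W'))"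
  proof (cases "\<alpha> \<in> Q1 \<and> j < d (tgt \<alpha>) \<and> k < d (src \<alpha>)")
    case True
    let ?v = "pact tgt (pth (arr \<alpha>)) (pv (bas (src \<alpha>) k))" and ?s = "pv (bas (tgt \<alpha>) j)"
    have vV: "?v \<in> V"
      using pact_pv_in_V[OF _ valid_arr] sig_good bas_in[OF srcn] True by blast
    have sS: "?s \<in> ?S" using bas_in[OF tgtn] True by blast
    have g: "chart_coord ?S ?v ?s \<in> polys_over (chart_atoms V ?S)"
      by (rule polys_over.atom) (use vV sS in \<open>auto simp: chart_atoms_def\<close>)
    show ?thesis using icW g h True
      by (intro exI[of _ ?S] conjI bexI[of _ "chart_coord ?S ?v ?s"] bexI[of _ ?h]) (auto simp: phi_def)
  next
    case False
    have g: "(\<lambda>_. 0) \<in> polys_over (chart_atoms V ?S)" by (rule polys_over.const)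
    show ?thesis using icW g h False
      by (intro exI[of _ ?S] conjI bexI[of _ "\<lambda>_. 0"] bexI[of _ ?h]) (auto simp: phi_def)
  qed
qed

lemma main:
  "\<exists>(\<phi> :: (nat \<times> 'a qpath \<Rightarrow> 'k) set \<Rightarrow> 'a \<Rightarrow> nat \<Rightarrow> nat \<Rightarrow> 'k) Z \<psi>.
           zariski_closed_rep Q1 src tgt d Z \<and> Z \<subseteq> Rep n Q1 src tgt I d \<and>
           (\<forall>C\<in>Grass n Q1 src tgt I t e L m \<sigma>. \<phi> C \<in> Z \<and> \<psi> (\<phi> C) = C) \<and>
           (\<forall>z\<in>Z. \<psi> z \<in> Grass n Q1 src tgt I t e L m \<sigma> \<and> \<phi> (\<psi> z) = z) \<and>
           gr_to_rep_morphism (Phat n Q1 src tgt t e) (Grass n Q1 src tgt I t e L m \<sigma>) \<phi> \<and>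
           rep_to_gr_morphism (Phat n Q1 src tgt t e) Z \<psi> \<and>
           (\<forall>C\<in>Grass n Q1 src tgt I t e L m \<sigma>. quot_iso_rep n Q1 src tgt t e d C (\<phi> C))"
proof (intro exI[of _ phi] exI[of _ Z0] exI[of _ Cx] conjI ballI)
  show "zariski_closed_rep Q1 src tgt d Z0" by (rule Z0_closed)
  show "Z0 \<subseteq> Rep n Q1 src tgt I d" by (auto simp: Z0_def)
  show "phi C \<in> Z0" if "C \<in> GR" for C using phi_Z0[OF that] .
  show "Cx (phi C) = C" if "C \<in> GR" for C using Cx_phi[OF that] .
  show "Cx z \<in> GR" if "z \<in> Z0" for z using Cx_Grass[OF that] .
  show "phi (Cx z) = z" if "z \<in> Z0" for z using phi_Cx[OF that] .
  show "gr_to_rep_morphism V GR phi" by (rule gr_to_rep)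
  show "rep_to_gr_morphism V Z0 Cx" by (rule rep_to_gr)
  show "quot_iso_rep n Q1 src tgt t e d C (phi C)" if "C \<in> GR" for C
    using Cx_iso[OF phi_Z0[OF that]] Cx_phi[OF that] by simp
qed

end


theorem lemma3p1:
  fixes n :: nat and Q1 :: "'a set" and src tgt :: "'a \<Rightarrow> nat"
    and I :: "('a qpath \<Rightarrow> 'k::field) set"
    and L t :: nat and e :: "nat \<Rightarrow> nat"
    and m :: "nat \<Rightarrow> nat \<Rightarrow> nat" and d :: "nat \<Rightarrow> nat"
    and \<sigma> :: "(nat \<times> 'a qpath) set"
  assumes K_alg_closed: "alg_closed_field TYPE('k)"
    and quiver: "finite Q1" "\<forall>\<alpha>\<in>Q1. src \<alpha> < n \<and> tgt \<alpha> < n"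
    and adm: "admissible n Q1 src tgt I"
    and loewy: "Rpow n Q1 src tgt (Suc L) \<subseteq> I" "\<not> Rpow n Q1 src tgt L \<subseteq> I"
    and top: "\<forall>r<t. e r < n" "\<forall>i<n. card {r. r < t \<and> e r = i} = m 0 i"
    and skel: "is_skeleton n Q1 src tgt t e L m \<sigma>"
    and dimvec: "\<forall>i<n. d i = (\<Sum>l\<le>L. m l i)"
    and nonempty: "Grass n Q1 src tgt I t e L m \<sigma> \<noteq> {}"
  shows "\<exists>(\<phi> :: (nat \<times> 'a qpath \<Rightarrow> 'k) set \<Rightarrow> 'a \<Rightarrow> nat \<Rightarrow> nat \<Rightarrow> 'k) Z \<psi>.
           zariski_closed_rep Q1 src tgt d Z \<and> Z \<subseteq> Rep n Q1 src tgt I d \<and>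
           (\<forall>C\<in>Grass n Q1 src tgt I t e L m \<sigma>. \<phi> C \<in> Z \<and> \<psi> (\<phi> C) = C) \<and>
           (\<forall>z\<in>Z. \<psi> z \<in> Grass n Q1 src tgt I t e L m \<sigma> \<and> \<phi> (\<psi> z) = z) \<and>
           gr_to_rep_morphism (Phat n Q1 src tgt t e) (Grass n Q1 src tgt I t e L m \<sigma>) \<phi> \<and>
           rep_to_gr_morphism (Phat n Q1 src tgt t e) Z \<psi> \<and>
           (\<forall>C\<in>Grass n Q1 src tgt I t e L m \<sigma>. quot_iso_rep n Q1 src tgt t e d C (\<phi> C))"
proof -
  interpret qs n Q1 src tgt I L t e m d \<sigma>
    using quiver adm loewy(1) top(1) skel dimvec by unfold_locales auto
  show ?thesis by (rule main)
qed

end
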